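(* For each $d$, let $X_0,X_1,\dots,X_n$ be i.i.d. $N(0,I_d)$, let $\varepsilon\sim N(0,I_d)$ be independent of them, let $Y_0=X_0+\varepsilon=(y_{01},\dots,y_{0d})^T$, and let $w_i=\exp(-\|Y_0-X_i\|^2/2)/\sum_{j=1}^n\exp(-\|Y_0-X_j\|^2/2)$. Conditionally on $Y_0,X_1,\dots,X_n$, let $X_1^*,\dots,X_n^*$ be an i.i.d. sample from the weighted empirical measure $\sum_{j=1}^n w_j\delta_{X_j}$. Fix $k$ and let $(x^*_{j1},\dots,x^*_{jk})$ denote the first $k$ coordinates of $X_j^*$. Then, as $\log n/d\to\infty$, the empirical distribution $\frac1n\sum_{j=1}^n\delta_{(x^*_{j1},\dots,x^*_{jk})}$ converges in law (weakly, in probability) to $N\!\left(\tfrac12(y_{01},\dots,y_{0k})^T,\ \tfrac12 I_k\right)$.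
   Context: $\delta_x$ denotes the point mass at $x$; $\|\cdot\|$ is the Euclidean norm. *)

theory Defs
  imports "HOL-Probability.Probability"
begin

text \<open>Standard normal distribution on the real line, and the standard Gaussian
  N(0, I_d) on R^d, vectors in R^d being represented as functions nat => real
  with coordinates 0..d-1 (extensional product measure).\<close>

definition std_gauss :: "real measure" where
  "std_gauss = density lborel std_normal_density"

definition gauss_vec :: "nat \<Rightarrow> (nat \<Rightarrow> real) measure" where
  "gauss_vec d = PiM {..<d} (\<lambda>_. std_gauss)"

text \<open>The data (X_0, X_1, ..., X_n, eps): component 0 is X_0, components 1..n are
  X_1..X_n, component n+1 is eps; all i.i.d. N(0, I_d).\<close>

definition data_measure :: "nat \<Rightarrow> nat \<Rightarrow> (nat \<Rightarrow> nat \<Rightarrow> real) measure" where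
  "data_measure n d = PiM {..Suc n} (\<lambda>_. gauss_vec d)"

definition Y0 :: "nat \<Rightarrow> (nat \<Rightarrow> nat \<Rightarrow> real) \<Rightarrow> nat \<Rightarrow> real" where
  "Y0 n \<omega> j = \<omega> 0 j + \<omega> (Suc n) j"

definition sqdist :: "nat \<Rightarrow> (nat \<Rightarrow> real) \<Rightarrow> (nat \<Rightarrow> real) \<Rightarrow> real" where
  "sqdist d u v = (\<Sum>j<d. (u j - v j)\<^sup>2)"

definition weight :: "nat \<Rightarrow> nat \<Rightarrow> (nat \<Rightarrow> nat \<Rightarrow> real) \<Rightarrow> nat \<Rightarrow> real" where
  "weight n d \<omega> i =
     exp (- sqdist d (Y0 n \<omega>) (\<omega> i) / 2) /
     (\<Sum>j=1..n. exp (- sqdist d (Y0 n \<omega>) (\<omega> j) / 2))"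

text \<open>First k coordinates, where the coordinates of R^k are indexed by a finite
  type 'k via a bijection e from 'k onto {0..<CARD('k)}.\<close>
definition proj :: "('k::finite \<Rightarrow> nat) \<Rightarrow> (nat \<Rightarrow> real) \<Rightarrow> real ^ 'k" where
  "proj e x = (\<chi> i. x (e i))"

text \<open>Integral of f against the empirical measure (1/n) sum_l delta of the first k
  coordinates of X*_l, where X*_l = X_{J l}.\<close>
definition emp_int ::
  "nat \<Rightarrow> ('k::finite \<Rightarrow> nat) \<Rightarrow> (real ^ 'k \<Rightarrow> real) \<Rightarrow> (nat \<Rightarrow> nat \<Rightarrow> real) \<Rightarrow> (nat \<Rightarrow> nat) \<Rightarrow> real" where
  "emp_int n e f \<omega> J = (1 / real n) * (\<Sum>l=1..n. f (proj e (\<omega> (J l))))"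

text \<open>Integral of f against N((1/2)(y_01..y_0k), (1/2) I_k).\<close>
definition target_int ::
  "nat \<Rightarrow> ('k::finite \<Rightarrow> nat) \<Rightarrow> (real ^ 'k \<Rightarrow> real) \<Rightarrow> (nat \<Rightarrow> nat \<Rightarrow> real) \<Rightarrow> real" where
  "target_int n e f \<omega> =
     (LINT z|gauss_vec CARD('k). f (\<chi> i. Y0 n \<omega> (e i) / 2 + sqrt (1/2) * z (e i)))"

text \<open>Probability (over data and the conditional i.i.d. resampling of indices
  J_1..J_n from the weights) that the two integrals differ by more than eps.\<close>
definition dev_prob ::
  "nat \<Rightarrow> nat \<Rightarrow> ('k::finite \<Rightarrow> nat) \<Rightarrow> (real ^ 'k \<Rightarrow> real) \<Rightarrow> real \<Rightarrow> real" where
  "dev_prob n d e f eps =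
     (LINT \<omega>|data_measure n d.
        (\<Sum>J \<in> {1..n} \<rightarrow>\<^sub>E {1..n}.
           (\<Prod>l=1..n. weight n d \<omega> (J l)) *
           (if \<bar>emp_int n e f \<omega> J - target_int n e f \<omega>\<bar> > eps then 1 else 0)))"

end

theory Submission
  imports Defs
begin


lemma gauss_master:
  fixes a b c :: real assumes a: "a > 0"
  shows "(\<integral>\<^sup>+x. ennreal (exp (-(a*x\<^sup>2 + b*x + c))) \<partial>lborel) = ennreal (sqrt (pi/a) * exp (b\<^sup>2/(4*a) - c))"
proof -
  define \<sigma> where "\<sigma> = sqrt (1/(2*a))"
  define \<mu> where "\<mu> = -b/(2*a)"
  define K where "K = sqrt (pi/a) * exp (b\<^sup>2/(4*a) - c)"
  have s0: "\<sigma> > 0" using a by (simp add: \<sigma>_def)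
  have s2: "\<sigma>\<^sup>2 = 1/(2*a)" using a by (simp add: \<sigma>_def)
  have Kpos: "K \<ge> 0" using a by (auto simp: K_def intro!: mult_nonneg_nonneg)
  have eq: "exp (-(a*x\<^sup>2 + b*x + c)) = K * normal_density \<mu> \<sigma> x" for x
  proof -
    have "2*pi*\<sigma>\<^sup>2 = pi/a" using s2 by simp
    hence sq: "sqrt (pi/a) * (1 / sqrt (2*pi*\<sigma>\<^sup>2)) = 1" using a by simp
    have ex: "-(x - \<mu>)\<^sup>2/(2*\<sigma>\<^sup>2) + (b\<^sup>2/(4*a) - c) = -(a*x\<^sup>2 + b*x + c)"
      using a unfolding s2 \<mu>_def by (simp add: field_simps power2_eq_square)
    have "K * normal_density \<mu> \<sigma> x = (sqrt (pi/a) * (1 / sqrt (2*pi*\<sigma>\<^sup>2))) * exp (-(x - \<mu>)\<^sup>2/(2*\<sigma>\<^sup>2) + (b\<^sup>2/(4*a) - c))"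
      unfolding K_def normal_density_def exp_add by (simp add: ac_simps)
    also have "\<dots> = exp (-(a*x\<^sup>2 + b*x + c))" unfolding sq ex by simp
    finally show ?thesis by simp
  qed
  have "(\<integral>\<^sup>+x. ennreal (exp (-(a*x\<^sup>2 + b*x + c))) \<partial>lborel) = (\<integral>\<^sup>+x. ennreal K * ennreal (normal_density \<mu> \<sigma> x) \<partial>lborel)"
    by (rule nn_integral_cong) (simp only: eq ennreal_mult[OF Kpos normal_density_nonneg])
  also have "\<dots> = ennreal K * (\<integral>\<^sup>+x. ennreal (normal_density \<mu> \<sigma> x) \<partial>lborel)"
    by (rule nn_integral_cmult) simp
  also have "(\<integral>\<^sup>+x. ennreal (normal_density \<mu> \<sigma> x) \<partial>lborel) = 1"
    using s0 by (subst nn_integral_eq_integral) auto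
  finally show ?thesis by (simp add: K_def)
qed

lemma prob_std_gauss: "prob_space std_gauss"
  unfolding std_gauss_def by (rule prob_space_normal_density) simp

lemma sets_std_gauss[simp, measurable_cong]: "sets std_gauss = sets borel"
  by (simp add: std_gauss_def)
lemma space_std_gauss[simp]: "space std_gauss = UNIV"
  by (simp add: std_gauss_def)

lemma nn_integral_std_gauss:
  assumes [measurable]: "h \<in> borel_measurable borel"
  shows "(\<integral>\<^sup>+x. h x \<partial>std_gauss) = (\<integral>\<^sup>+x. ennreal (std_normal_density x) * h x \<partial>lborel)"
  unfolding std_gauss_def by (subst nn_integral_density) auto

lemma std_gauss_quad:
  fixes a b c :: real assumes a: "a + 1/2 > 0"
  shows "(\<integral>\<^sup>+x. ennreal (exp (-(a*x\<^sup>2 + b*x + c))) \<partial>std_gauss)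
     = ennreal (sqrt (pi/(a+1/2)) * exp (b\<^sup>2/(4*(a+1/2)) - c) / sqrt (2*pi))"
proof -
  have eq: "ennreal (std_normal_density x) * ennreal (exp (-(a*x\<^sup>2 + b*x + c)))
     = ennreal (1 / sqrt (2*pi)) * ennreal (exp (-((a+1/2)*x\<^sup>2 + b*x + c)))" for x
    unfolding std_normal_density_def ennreal_mult'[symmetric, OF exp_ge_zero]
    by (simp add: ennreal_mult[symmetric] mult_exp_exp field_simps)
  show ?thesis
    apply (subst nn_integral_std_gauss, measurable)
    apply (simp only: eq)
    apply (subst nn_integral_cmult, measurable)
    apply (subst gauss_master[OF a])
    apply (subst ennreal_mult'[symmetric])
     apply simp
    apply (simp add: field_simps)
    done
qed



definition c1 :: "real \<Rightarrow> real" where "c1 t = exp (-t\<^sup>2/4) / sqrt 2"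
definition ghat :: "real \<Rightarrow> real \<Rightarrow> real" where "ghat t x = exp (-(t-x)\<^sup>2/2) / c1 t"
definition Npost :: "real \<Rightarrow> real measure" where
  "Npost t = density lborel (normal_density (t/2) (sqrt (1/2)))"

lemma c1_pos: "c1 t > 0" by (simp add: c1_def)
lemma ghat_nonneg: "ghat t x \<ge> 0" using c1_pos[of t] by (simp add: ghat_def)
lemma ghat_meas[measurable]: "ghat t \<in> borel_measurable borel" unfolding ghat_def by measurable
lemma prob_Npost: "prob_space (Npost t)" unfolding Npost_def by (rule prob_space_normal_density) simp
lemma sets_Npost[simp, measurable_cong]: "sets (Npost t) = sets borel" by (simp add: Npost_def)

lemma density_ghat: "density std_gauss (\<lambda>x. ennreal (ghat t x)) = Npost t"
proof -
  have eq: "std_normal_density x * ghat t x = normal_density (t/2) (sqrt (1/2)) x" for x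
  proof -
    have e: "-x\<^sup>2/2 + (-(t-x)\<^sup>2/2) + t\<^sup>2/4 = -(x - t/2)\<^sup>2/(2*(sqrt (1/2))\<^sup>2)"
      by (simp add: field_simps power2_eq_square)
    have "std_normal_density x * ghat t x = (1/sqrt(2*pi) * sqrt 2) * exp (-x\<^sup>2/2 + (-(t-x)\<^sup>2/2) + t\<^sup>2/4)"
      unfolding std_normal_density_def ghat_def c1_def exp_add exp_minus
      by (simp add: field_simps exp_minus)
    also have "1/sqrt(2*pi) * sqrt 2 = 1 / sqrt (2*pi*(sqrt (1/2))\<^sup>2)"
      by (simp add: real_sqrt_mult field_simps)
    finally show ?thesis unfolding e normal_density_def by simp
  qed
  show ?thesis
    unfolding std_gauss_def Npost_def
    by (subst density_density_eq) (auto intro!: density_cong simp: ennreal_mult'[symmetric] eq)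
qed



lemma sqrt_ratio: "a > 0 \<Longrightarrow> sqrt (pi/a) / sqrt (2*pi) = sqrt (1/(2*a))"
  by (simp add: real_sqrt_divide[symmetric])

lemma c2_int: "(\<integral>\<^sup>+x. ennreal (exp (-(t-x)\<^sup>2)) \<partial>std_gauss) = ennreal (exp (-t\<^sup>2/3) / sqrt 3)"
proof -
  have 1: "(\<lambda>x. ennreal (exp (-(t-x)\<^sup>2))) = (\<lambda>x. ennreal (exp (-(1*x\<^sup>2 + (-2*t)*x + t\<^sup>2))))"
    by (simp add: power2_eq_square algebra_simps)
  have a: "sqrt (pi/(1+1/2)) / sqrt (2*pi) = sqrt (1/3)"
    using sqrt_ratio[of "1+1/2"] by simp
  have b: "(-2*t)\<^sup>2/(4*(1+1/2)) - t\<^sup>2 = -t\<^sup>2/3" by (simp add: power2_eq_square field_simps)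
  have "sqrt (pi/(1+1/2)) * exp ((-2*t)\<^sup>2/(4*(1+1/2)) - t\<^sup>2) / sqrt (2*pi)
      = (sqrt (pi/(1+1/2)) / sqrt (2*pi)) * exp ((-2*t)\<^sup>2/(4*(1+1/2)) - t\<^sup>2)" by simp
  also have "\<dots> = exp (-t\<^sup>2/3) / sqrt 3" unfolding a b by (simp add: real_sqrt_divide)
  finally show ?thesis unfolding 1 using std_gauss_quad[of 1 "-2*t" "t\<^sup>2"] by simp
qed

lemma rho_int: "(\<integral>\<^sup>+x. ennreal (exp ((a+x)\<^sup>2/6)) \<partial>std_gauss) = ennreal (sqrt (3/2) * exp (a\<^sup>2/4))"
proof -
  have e: "(a+x)\<^sup>2/6 = -((-1/6)*x\<^sup>2 + (-a/3)*x + (-a\<^sup>2/6))" for x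
    by (simp add: power2_eq_square field_simps)
  have 1: "(\<lambda>x. ennreal (exp ((a+x)\<^sup>2/6))) = (\<lambda>x. ennreal (exp (-((-1/6)*x\<^sup>2 + (-a/3)*x + (-a\<^sup>2/6)))))"
    by (simp only: e)
  have q: "sqrt (pi/(-1/6+1/2)) / sqrt (2*pi) = sqrt (3/2)"
    using sqrt_ratio[of "-1/6+1/2"] by simp
  have b: "(-a/3)\<^sup>2/(4*(-1/6+1/2)) - (-a\<^sup>2/6) = a\<^sup>2/4" by (simp add: power2_eq_square field_simps)
  have "sqrt (pi/(-1/6+1/2)) * exp ((-a/3)\<^sup>2/(4*(-1/6+1/2)) - (-a\<^sup>2/6)) / sqrt (2*pi)
      = (sqrt (pi/(-1/6+1/2)) / sqrt (2*pi)) * exp ((-a/3)\<^sup>2/(4*(-1/6+1/2)) - (-a\<^sup>2/6))" by simp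
  also have "\<dots> = sqrt (3/2) * exp (a\<^sup>2/4)" unfolding q b ..
  finally show ?thesis unfolding 1 using std_gauss_quad[of "-1/6" "-a/3" "-a\<^sup>2/6"] by simp
qed

lemma fin_int: "(\<integral>\<^sup>+x. ennreal (exp (x\<^sup>2/4)) \<partial>std_gauss) = ennreal (sqrt 2)"
proof -
  have 1: "(\<lambda>x. ennreal (exp (x\<^sup>2/4))) = (\<lambda>x. ennreal (exp (-((-1/4)*x\<^sup>2 + 0*x + 0))))"
    by simp
  have q: "sqrt (pi/(-1/4+1/2)) / sqrt (2*pi) = sqrt 2"
    using sqrt_ratio[of "-1/4+1/2"] by simp
  have "sqrt (pi/(-1/4+1/2)) * exp (0\<^sup>2/(4*(-1/4+1/2)) - 0) / sqrt (2*pi) = sqrt 2"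
    using q by simp
  thus ?thesis unfolding 1 using std_gauss_quad[of "-1/4" 0 0] by simp
qed

lemma PiM_density_prod:
  fixes M :: "'i \<Rightarrow> 'a measure" and g :: "'i \<Rightarrow> 'a \<Rightarrow> ennreal"
  assumes fin: "finite I" and sf: "\<And>i. sigma_finite_measure (M i)"
  and sf2: "\<And>i. sigma_finite_measure (density (M i) (g i))"
  and g[measurable]: "\<And>i. i \<in> I \<Longrightarrow> g i \<in> borel_measurable (M i)"
  shows "density (PiM I M) (\<lambda>x. \<Prod>i\<in>I. g i (x i)) = PiM I (\<lambda>i. density (M i) (g i))"
proof -
  interpret M: product_sigma_finite M using sf by (simp add: product_sigma_finite_def)
  interpret D: product_sigma_finite "\<lambda>i. density (M i) (g i)" using sf2 by (simp add: product_sigma_finite_def)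
  have gm: "(\<lambda>x. \<Prod>i\<in>I. g i (x i)) \<in> borel_measurable (PiM I M)"
    using fin by measurable
  show ?thesis
  proof (rule D.PiM_eqI[OF fin])
    show "sets (density (Pi\<^sub>M I M) (\<lambda>x. \<Prod>i\<in>I. g i (x i))) = sets (Pi\<^sub>M I (\<lambda>i. density (M i) (g i)))"
      unfolding sets_density by (rule sets_PiM_cong) simp_all
  next
    fix A assume A: "\<And>i. i \<in> I \<Longrightarrow> A i \<in> sets (density (M i) (g i))"
    hence A': "\<And>i. i \<in> I \<Longrightarrow> A i \<in> sets (M i)" by simp
    have PA: "Pi\<^sub>E I A \<in> sets (PiM I M)" using A' fin by (intro sets_PiM_I_finite) auto
    have "emeasure (density (Pi\<^sub>M I M) (\<lambda>x. \<Prod>i\<in>I. g i (x i))) (Pi\<^sub>E I A)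
        = (\<integral>\<^sup>+x. (\<Prod>i\<in>I. g i (x i)) * indicator (Pi\<^sub>E I A) x \<partial>PiM I M)"
      using PA gm by (simp add: emeasure_density)
    also have "\<dots> = (\<integral>\<^sup>+x. (\<Prod>i\<in>I. g i (x i) * indicator (A i) (x i)) \<partial>PiM I M)"
    proof (rule nn_integral_cong)
      fix x assume x: "x \<in> space (PiM I M)"
      have "indicator (Pi\<^sub>E I A) x = (\<Prod>i\<in>I. indicator (A i) (x i) :: ennreal)"
      proof (cases "x \<in> Pi\<^sub>E I A")
        case True thus ?thesis by (auto simp: indicator_def PiE_iff)
      next
        case False
        then obtain i where "i \<in> I" "x i \<notin> A i" using x by (auto simp: space_PiM PiE_iff)
        thus ?thesis using False fin by (auto simp: indicator_def intro!: prod_zero)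
      qed
      thus "(\<Prod>i\<in>I. g i (x i)) * indicator (Pi\<^sub>E I A) x = (\<Prod>i\<in>I. g i (x i) * indicator (A i) (x i))"
        by (simp add: prod.distrib)
    qed
    also have "\<dots> = (\<Prod>i\<in>I. \<integral>\<^sup>+y. g i y * indicator (A i) y \<partial>M i)"
      using A' fin by (intro M.product_nn_integral_prod) auto
    also have "\<dots> = (\<Prod>i\<in>I. emeasure (density (M i) (g i)) (A i))"
      using A' by (intro prod.cong refl) (simp add: emeasure_density)
    finally show "emeasure (density (Pi\<^sub>M I M) (\<lambda>x. \<Prod>i\<in>I. g i (x i))) (Pi\<^sub>E I A) = (\<Prod>i\<in>I. emeasure (density (M i) (g i)) (A i))" .
  qed
qed



lemma measurable_vec_lambda:
  fixes g :: "'a \<Rightarrow> 'k::finite \<Rightarrow> real"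
  assumes "\<And>i. (\<lambda>x. g x i) \<in> borel_measurable M"
  shows "(\<lambda>x. \<chi> i. g x i) \<in> borel_measurable M"
  using assms by (subst borel_measurable_euclidean_space) (auto simp: Basis_vec_def inner_axis)

lemma sigma_finite_Npost: "sigma_finite_measure (Npost t)"
proof -
  interpret prob_space "Npost t" by (rule prob_Npost)
  show ?thesis by unfold_locales
qed

lemma sigma_finite_std_gauss: "sigma_finite_measure std_gauss"
proof -
  interpret prob_space std_gauss by (rule prob_std_gauss)
  show ?thesis by unfold_locales
qed

lemma post_prod:
  fixes y :: "nat \<Rightarrow> real"
  shows "density (gauss_vec D) (\<lambda>x. ennreal (\<Prod>j<D. ghat (y j) (x j))) = PiM {..<D} (\<lambda>j. Npost (y j))"
proof -
  have "density (gauss_vec D) (\<lambda>x. ennreal (\<Prod>j<D. ghat (y j) (x j)))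
      = density (PiM {..<D} (\<lambda>_. std_gauss)) (\<lambda>x. \<Prod>j\<in>{..<D}. (\<lambda>j t. ennreal (ghat (y j) t)) j (x j))"
    unfolding gauss_vec_def by (simp add: prod_ennreal ghat_nonneg)
  also have "\<dots> = PiM {..<D} (\<lambda>j. density std_gauss (\<lambda>t. ennreal (ghat (y j) t)))"
    by (rule PiM_density_prod) (auto simp: sigma_finite_std_gauss density_ghat sigma_finite_Npost)
  also have "\<dots> = PiM {..<D} (\<lambda>j. Npost (y j))" by (simp add: density_ghat)
  finally show ?thesis .
qed

lemma marg_Npost:
  fixes y :: "nat \<Rightarrow> real" and F :: "(nat \<Rightarrow> real) \<Rightarrow> real"
  assumes KD: "K \<le> D" and F[measurable]: "F \<in> borel_measurable (PiM {..<K} (\<lambda>j. Npost (y j)))"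
  shows "(\<integral>x. F (restrict x {..<K}) \<partial>PiM {..<D} (\<lambda>j. Npost (y j))) = (\<integral>w. F w \<partial>PiM {..<K} (\<lambda>j. Npost (y j)))"
proof -
  interpret P: product_prob_space "\<lambda>j. Npost (y j)" "{..<D}"
    by (auto simp: product_prob_space_def product_sigma_finite_def product_prob_space_axioms_def
          sigma_finite_Npost prob_Npost)
  have d: "distr (PiM {..<D} (\<lambda>j. Npost (y j))) (PiM {..<K} (\<lambda>j. Npost (y j))) (\<lambda>x. restrict x {..<K})
      = PiM {..<K} (\<lambda>j. Npost (y j))"
    using KD by (intro P.distr_PiM_restrict_finite) auto
  have m: "(\<lambda>x. restrict x {..<K}) \<in> measurable (PiM {..<D} (\<lambda>j. Npost (y j))) (PiM {..<K} (\<lambda>j. Npost (y j)))"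
    using KD by (intro measurable_restrict_subset) auto
  have "(\<integral>w. F w \<partial>PiM {..<K} (\<lambda>j. Npost (y j))) = (\<integral>w. F w \<partial>distr (PiM {..<D} (\<lambda>j. Npost (y j))) (PiM {..<K} (\<lambda>j. Npost (y j))) (\<lambda>x. restrict x {..<K}))"
    by (simp only: d)
  also have "\<dots> = (\<integral>x. F (restrict x {..<K}) \<partial>PiM {..<D} (\<lambda>j. Npost (y j)))"
    by (rule integral_distr[OF m F])
  finally show ?thesis by simp
qed

lemma affine_std_gauss:
  "emeasure std_gauss ((\<lambda>z. t/2 + sqrt (1/2) * z) -` A) = emeasure (Npost t) A"
  if A: "A \<in> sets borel" for A
proof -
  interpret prob_space std_gauss by (rule prob_std_gauss)
  have X: "distributed std_gauss lborel (\<lambda>x. x) (normal_density 0 1)"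
    unfolding distributed_def std_gauss_def
    by (auto simp: distr_id2)
  have "distributed std_gauss lborel (\<lambda>x. t/2 + sqrt (1/2) * x) (normal_density (t/2 + sqrt (1/2) * 0) (\<bar>sqrt (1/2)\<bar> * 1))"
    by (rule normal_density_affine[OF X]) auto
  hence "distr std_gauss lborel (\<lambda>x. t/2 + sqrt (1/2) * x) = Npost t"
    unfolding distributed_def Npost_def by simp
  hence "emeasure (distr std_gauss lborel (\<lambda>x. t/2 + sqrt (1/2) * x)) A = emeasure (Npost t) A" by simp
  thus ?thesis using A by (subst (asm) emeasure_distr) auto
qed

lemma aff_vimage: "A \<in> sets borel \<Longrightarrow> (\<lambda>z::real. a + b * z) -` A \<in> sets borel"
proof -
  assume A: "A \<in> sets borel"
  have "(\<lambda>z::real. a + b * z) \<in> borel_measurable borel" by measurable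
  from measurable_sets[OF this A] show ?thesis by simp
qed

lemma affine_PiM:
  fixes y :: "nat \<Rightarrow> real"
  shows "PiM {..<K} (\<lambda>j. Npost (y j)) =
     distr (gauss_vec K) (PiM {..<K} (\<lambda>_. borel)) (\<lambda>z. \<lambda>j\<in>{..<K}. y j/2 + sqrt (1/2) * z j)"
proof -
  interpret D: product_sigma_finite "\<lambda>j. Npost (y j)"
    by (auto simp: product_sigma_finite_def sigma_finite_Npost)
  interpret G: product_sigma_finite "\<lambda>j. std_gauss"
    by (auto simp: product_sigma_finite_def sigma_finite_std_gauss)
  have m: "(\<lambda>z. \<lambda>j\<in>{..<K}. y j/2 + sqrt (1/2) * z j) \<in> measurable (gauss_vec K) (PiM {..<K} (\<lambda>_. borel))"
    unfolding gauss_vec_def by measurable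
  show ?thesis
  proof (rule D.PiM_eqI[symmetric])
    show "sets (distr (gauss_vec K) (PiM {..<K} (\<lambda>_. borel)) (\<lambda>z. \<lambda>j\<in>{..<K}. y j/2 + sqrt (1/2) * z j))
        = sets (PiM {..<K} (\<lambda>j. Npost (y j)))"
      unfolding sets_distr by (rule sets_PiM_cong) simp_all
  next
    fix A assume A: "\<And>i. i \<in> {..<K} \<Longrightarrow> A i \<in> sets (Npost (y i))"
    have Av: "\<And>i. i<K \<Longrightarrow> (\<lambda>z. y i/2 + sqrt(1/2)*z) -` A i \<in> sets borel"
      using aff_vimage A by simp
    have pre: "(\<lambda>z. \<lambda>j\<in>{..<K}. y j/2 + sqrt (1/2) * z j) -` Pi\<^sub>E {..<K} A \<inter> space (gauss_vec K)
       = Pi\<^sub>E {..<K} (\<lambda>j. (\<lambda>z. y j/2 + sqrt (1/2) * z) -` A j)"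
      unfolding gauss_vec_def by (auto simp: space_PiM PiE_iff)
    have "emeasure (distr (gauss_vec K) (PiM {..<K} (\<lambda>_. borel)) (\<lambda>z. \<lambda>j\<in>{..<K}. y j/2 + sqrt (1/2) * z j)) (Pi\<^sub>E {..<K} A)
        = emeasure (gauss_vec K) (Pi\<^sub>E {..<K} (\<lambda>j. (\<lambda>z. y j/2 + sqrt (1/2) * z) -` A j))"
      using A by (subst emeasure_distr[OF m]) (auto simp: pre intro!: sets_PiM_I_finite aff_vimage)
    also have "\<dots> = (\<Prod>j<K. emeasure std_gauss ((\<lambda>z. y j/2 + sqrt (1/2) * z) -` A j))"
      unfolding gauss_vec_def using Av
      by (subst G.emeasure_PiM) (auto)
    also have "\<dots> = (\<Prod>j<K. emeasure (Npost (y j)) (A j))"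
      using A by (intro prod.cong refl affine_std_gauss) auto
    finally show "emeasure (distr (gauss_vec K) (PiM {..<K} (\<lambda>_. borel)) (\<lambda>z. \<lambda>j\<in>{..<K}. y j/2 + sqrt (1/2) * z j)) (Pi\<^sub>E {..<K} A)
        = (\<Prod>j<K. emeasure (Npost (y j)) (A j))" .
  qed simp
qed


lemma proj_measurable:
  fixes e :: "'k::finite \<Rightarrow> nat" and f :: "real^'k \<Rightarrow> real"
  assumes eK: "\<And>i. e i \<in> I" and fm[measurable]: "f \<in> borel_measurable borel"
  and sM: "\<And>i. i \<in> I \<Longrightarrow> sets (M i) = sets borel"
  shows "(\<lambda>w. f (proj e w)) \<in> borel_measurable (PiM I M)"
proof -
  have "(\<lambda>w. \<chi> i. w (e i)) \<in> borel_measurable (PiM I M)"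
  proof (rule measurable_vec_lambda)
    fix i
    have "(\<lambda>w. w (e i)) \<in> measurable (PiM I M) (M (e i))"
      using eK by (rule measurable_component_singleton)
    thus "(\<lambda>w. w (e i)) \<in> borel_measurable (PiM I M)"
    proof -
      have c: "measurable (PiM I M) (M (e i)) = borel_measurable (PiM I M)"
        by (rule measurable_cong_sets[OF refl sM[OF eK]])
      show ?thesis using \<open>(\<lambda>w. w (e i)) \<in> measurable (PiM I M) (M (e i))\<close> unfolding c .
    qed
  qed
  hence "(\<lambda>w. proj e w) \<in> borel_measurable (PiM I M)" unfolding proj_def .
  thus ?thesis by measurable
qed

lemma sqdist_prod:
  "exp (- sqdist D y x / 2) = (\<Prod>j<D. c1 (y j)) * (\<Prod>j<D. ghat (y j) (x j))"
proof -
  have "exp (- sqdist D y x / 2) = exp (\<Sum>j<D. -(y j - x j)\<^sup>2/2)"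
    unfolding sqdist_def by (simp add: sum_negf sum_divide_distrib)
  also have "\<dots> = (\<Prod>j<D. exp (-(y j - x j)\<^sup>2/2))" by (simp add: exp_sum)
  also have "\<dots> = (\<Prod>j<D. c1 (y j) * ghat (y j) (x j))"
    using c1_pos by (intro prod.cong refl) (simp add: ghat_def less_imp_neq[OF c1_pos, symmetric])
  finally show ?thesis by (simp add: prod.distrib)
qed

lemma mean_identity:
  fixes e :: "'k::finite \<Rightarrow> nat" and f :: "real^'k \<Rightarrow> real" and y :: "nat \<Rightarrow> real"
  assumes e: "bij_betw e UNIV {..<CARD('k)}" and KD: "CARD('k) \<le> D"
  and fm[measurable]: "f \<in> borel_measurable borel"
  shows "(\<integral>x. exp (- sqdist D y x / 2) * f (proj e x) \<partial>gauss_vec D)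
    = (\<Prod>j<D. c1 (y j)) * (\<integral>z. f (\<chi> i. y (e i)/2 + sqrt (1/2) * z (e i)) \<partial>gauss_vec CARD('k))"
proof -
  define K where "K = CARD('k)"
  have eK: "e i \<in> {..<K}" for i using bij_betw_apply[OF e] unfolding K_def by auto
  have eD: "e i \<in> {..<D}" for i using eK[of i] KD unfolding K_def by simp
  define Gh where "Gh x = (\<Prod>j<D. ghat (y j) (x j))" for x :: "nat \<Rightarrow> real"
  have Gh_nn: "Gh x \<ge> 0" for x unfolding Gh_def by (intro prod_nonneg) (simp add: ghat_nonneg)
  have Ghm[measurable]: "Gh \<in> borel_measurable (gauss_vec D)"
    unfolding Gh_def gauss_vec_def by measurable
  have Fm[measurable]: "(\<lambda>x. f (proj e x)) \<in> borel_measurable (gauss_vec D)"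
    unfolding gauss_vec_def using eD by (intro proj_measurable[OF _ fm]) auto
  have "(\<integral>x. exp (- sqdist D y x / 2) * f (proj e x) \<partial>gauss_vec D)
      = (\<integral>x. (\<Prod>j<D. c1 (y j)) * (Gh x * f (proj e x)) \<partial>gauss_vec D)"
    by (intro Bochner_Integration.integral_cong refl) (simp only: sqdist_prod Gh_def mult.assoc)
  also have "\<dots> = (\<Prod>j<D. c1 (y j)) * (\<integral>x. Gh x * f (proj e x) \<partial>gauss_vec D)"
    by simp
  also have "(\<integral>x. Gh x * f (proj e x) \<partial>gauss_vec D) = (\<integral>x. f (proj e x) \<partial>density (gauss_vec D) Gh)"
    using Gh_nn by (subst integral_density) auto
  also have "density (gauss_vec D) Gh = PiM {..<D} (\<lambda>j. Npost (y j))"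
    using post_prod[of D y] unfolding Gh_def .
  also have "(\<integral>x. f (proj e x) \<partial>PiM {..<D} (\<lambda>j. Npost (y j)))
      = (\<integral>x. f (proj e (restrict x {..<K})) \<partial>PiM {..<D} (\<lambda>j. Npost (y j)))"
    using eK by (intro Bochner_Integration.integral_cong refl) (simp add: proj_def)
  also have "\<dots> = (\<integral>w. f (proj e w) \<partial>PiM {..<K} (\<lambda>j. Npost (y j)))"
    using KD eK unfolding K_def by (intro marg_Npost proj_measurable[OF _ fm]) auto
  also have "PiM {..<K} (\<lambda>j. Npost (y j)) =
     distr (gauss_vec K) (PiM {..<K} (\<lambda>_. borel)) (\<lambda>z. \<lambda>j\<in>{..<K}. y j/2 + sqrt (1/2) * z j)"
    by (rule affine_PiM)
  also have "(\<integral>w. f (proj e w) \<partial>\<dots>) = (\<integral>z. f (proj e (\<lambda>j\<in>{..<K}. y j/2 + sqrt (1/2) * z j)) \<partial>gauss_vec K)"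
  proof (rule integral_distr)
    show "(\<lambda>z. \<lambda>j\<in>{..<K}. y j/2 + sqrt (1/2) * z j) \<in> measurable (gauss_vec K) (PiM {..<K} (\<lambda>_. borel))"
      unfolding gauss_vec_def by measurable
    show "(\<lambda>w. f (proj e w)) \<in> borel_measurable (PiM {..<K} (\<lambda>_. borel))"
      using eK by (intro proj_measurable[OF _ fm]) auto
  qed
  also have "\<dots> = (\<integral>z. f (\<chi> i. y (e i)/2 + sqrt (1/2) * z (e i)) \<partial>gauss_vec K)"
    using eK by (intro Bochner_Integration.integral_cong refl) (simp add: proj_def)
  finally show ?thesis unfolding K_def .
qed



lemma prod_two:
  fixes F :: "'i \<Rightarrow> 'c::comm_monoid_mult"
  assumes I: "finite I" "i \<in> I" "i' \<in> I" and one: "\<And>l. l \<in> I \<Longrightarrow> l \<noteq> i \<Longrightarrow> l \<noteq> i' \<Longrightarrow> F l = 1"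
  shows "(\<Prod>l\<in>I. F l) = (if i = i' then F i else F i * F i')"
proof (cases "i = i'")
  case True
  have "(\<Prod>l\<in>I. F l) = F i * (\<Prod>l\<in>I - {i}. F l)" using I by (simp add: prod.remove)
  also have "(\<Prod>l\<in>I - {i}. F l) = 1" using one True by (intro prod.neutral) auto
  finally show ?thesis using True by simp
next
  case False
  have "(\<Prod>l\<in>I. F l) = F i * (\<Prod>l\<in>I - {i}. F l)" using I by (simp add: prod.remove)
  also have "(\<Prod>l\<in>I - {i}. F l) = F i' * (\<Prod>l\<in>I - {i} - {i'}. F l)"
    using I False by (intro prod.remove) auto
  also have "(\<Prod>l\<in>I - {i} - {i'}. F l) = 1" using one by (intro prod.neutral) auto
  finally show ?thesis using False by (simp add: ac_simps)
qed

lemma var_PiM: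
  fixes M :: "'a measure" and h :: "'a \<Rightarrow> real" and J :: "'i set"
  assumes P: "prob_space M" and J: "finite J" and hm[measurable]: "h \<in> borel_measurable M"
    and hb: "\<And>x. x \<in> space M \<Longrightarrow> \<bar>h x\<bar> \<le> B"
  shows "(\<integral>z. (\<Sum>i\<in>J. (h (z i) - integral\<^sup>L M h))\<^sup>2 \<partial>PiM J (\<lambda>_. M))
     = real (card J) * (\<integral>x. (h x - integral\<^sup>L M h)\<^sup>2 \<partial>M)"
proof -
  interpret prob_space M by (rule P)
  interpret PS: product_sigma_finite "\<lambda>_. M" by (simp add: product_sigma_finite_def sigma_finite_measure_axioms)
  interpret PP: finite_product_prob_space "\<lambda>_. M" J
    by (auto simp: finite_product_prob_space_def finite_product_sigma_finite_def product_prob_space_def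
        product_sigma_finite_def product_prob_space_axioms_def finite_product_sigma_finite_axioms_def
        sigma_finite_measure_axioms J prob_space_axioms)
  define m where "m = integral\<^sup>L M h"
  have ih: "integrable M h" using hb by (intro integrable_const_bound[where B=B]) auto
  have ih2: "integrable M (\<lambda>x. (h x - m)\<^sup>2)"
  proof (intro integrable_const_bound[where B="(B + \<bar>m\<bar>)\<^sup>2"])
    show "AE x in M. norm ((h x - m)\<^sup>2) \<le> (B + \<bar>m\<bar>)\<^sup>2"
    proof (rule AE_I2)
      fix x assume "x \<in> space M"
      hence "\<bar>h x - m\<bar> \<le> B + \<bar>m\<bar>" using hb[of x] by linarith
      hence "\<bar>h x - m\<bar>\<^sup>2 \<le> (B + \<bar>m\<bar>)\<^sup>2" by (intro power_mono) auto
      thus "norm ((h x - m)\<^sup>2) \<le> (B + \<bar>m\<bar>)\<^sup>2" by simp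
    qed
  qed simp
  have ih1: "integrable M (\<lambda>x. h x - m)" using ih by simp
  have mean0: "(\<integral>x. h x - m \<partial>M) = 0" using ih by (simp add: m_def prob_space)
  define g where "g i i' l x = (if l = i \<and> l = i' then (h x - m)\<^sup>2 else if l = i \<or> l = i' then h x - m else 1)"
    for i i' l :: 'i and x
  have g1: "g i i' l = (\<lambda>_. 1)" if "l \<noteq> i" "l \<noteq> i'" for i i' l
    using that by (auto simp: g_def fun_eq_iff)
  have g2: "g i i' i = (\<lambda>x. if i = i' then (h x - m)\<^sup>2 else h x - m)" for i i'
    by (auto simp: g_def fun_eq_iff)
  have g3: "g i i' i' = (\<lambda>x. if i = i' then (h x - m)\<^sup>2 else h x - m)" for i i'
    by (auto simp: g_def fun_eq_iff)
  have gint: "integrable M (g i i' l)" for i i' l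
    unfolding g_def using ih1 ih2 by (cases "l = i \<and> l = i'"; cases "l = i \<or> l = i'") auto
  have prodg: "(\<Prod>l\<in>J. g i i' l (z l)) = (h (z i) - m) * (h (z i') - m)"
    if "i \<in> J" "i' \<in> J" for i i' z
    using prod_two[OF J that, of "\<lambda>l. g i i' l (z l)"] by (auto simp: g_def power2_eq_square)
  have cross: "(\<integral>z. (h (z i) - m) * (h (z i') - m) \<partial>PiM J (\<lambda>_. M))
      = (if i = i' then (\<integral>x. (h x - m)\<^sup>2 \<partial>M) else 0)" if i: "i \<in> J" "i' \<in> J" for i i'
  proof -
    have "(\<integral>z. (h (z i) - m) * (h (z i') - m) \<partial>PiM J (\<lambda>_. M)) = (\<integral>z. (\<Prod>l\<in>J. g i i' l (z l)) \<partial>PiM J (\<lambda>_. M))"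
      using prodg[OF i] by simp
    also have "\<dots> = (\<Prod>l\<in>J. integral\<^sup>L M (g i i' l))"
      using J gint by (intro PS.product_integral_prod) auto
    also have "\<dots> = (if i = i' then integral\<^sup>L M (g i i' i) else integral\<^sup>L M (g i i' i) * integral\<^sup>L M (g i i' i'))"
      by (rule prod_two[OF J i]) (simp add: g1 prob_space)
    also have "\<dots> = (if i = i' then (\<integral>x. (h x - m)\<^sup>2 \<partial>M) else 0)"
      by (auto simp: g2 g3 mean0)
    finally show ?thesis .
  qed
  have intg: "integrable (PiM J (\<lambda>_. M)) (\<lambda>z. (h (z i) - m) * (h (z i') - m))" if i: "i \<in> J" "i' \<in> J" for i i'
  proof -
    have "integrable (PiM J (\<lambda>_. M)) (\<lambda>z. (\<Prod>l\<in>J. g i i' l (z l)))"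
      using J gint by (intro PS.product_integrable_prod) auto
    thus ?thesis using prodg[OF i] by simp
  qed
  have "(\<integral>z. (\<Sum>i\<in>J. (h (z i) - m))\<^sup>2 \<partial>PiM J (\<lambda>_. M))
      = (\<integral>z. (\<Sum>i\<in>J. \<Sum>i'\<in>J. (h (z i) - m) * (h (z i') - m)) \<partial>PiM J (\<lambda>_. M))"
    by (simp add: power2_eq_square sum_product)
  also have "\<dots> = (\<Sum>i\<in>J. \<Sum>i'\<in>J. (\<integral>z. (h (z i) - m) * (h (z i') - m) \<partial>PiM J (\<lambda>_. M)))"
    using intg by (simp add: Bochner_Integration.integral_sum)
  also have "\<dots> = (\<Sum>i\<in>J. \<Sum>i'\<in>J. (if i = i' then (\<integral>x. (h x - m)\<^sup>2 \<partial>M) else 0))"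
    using cross by (intro sum.cong refl) auto
  also have "\<dots> = real (card J) * (\<integral>x. (h x - m)\<^sup>2 \<partial>M)"
    using J by (simp add: sum.delta)
  finally show ?thesis unfolding m_def .
qed


lemma resample_var:
  fixes w v :: "nat \<Rightarrow> real" and N :: nat
  assumes N: "N \<ge> 1" and wnn: "\<And>a. a \<in> {1..N} \<Longrightarrow> w a \<ge> 0" and wsum: "(\<Sum>a=1..N. w a) = 1"
    and vb: "\<And>a. \<bar>v a\<bar> \<le> B"
  shows "(\<Sum>J\<in>{1..N} \<rightarrow>\<^sub>E {1..N}. (\<Prod>l=1..N. w (J l)) *
            ((1 / real N) * (\<Sum>l=1..N. v (J l)) - (\<Sum>a=1..N. w a * v a))\<^sup>2) \<le> B\<^sup>2 / real N"
proof -
  define S where "S = (\<Sum>a=1..N. w a * v a)"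
  define u where "u a = v a - S" for a
  define V where "V = (\<Sum>a=1..N. w a * (u a)\<^sup>2)"
  define H where "H l l' q a = (if q = l \<and> q = l' then (u a)\<^sup>2 else if q = l \<or> q = l' then u a else 1)"
    for l l' q :: nat and a
  have Npos: "real N > 0" using N by simp
  have wsum': "sum w {Suc 0..N} = 1" using wsum by simp
  have wu0: "(\<Sum>a=1..N. w a * u a) = 0"
    unfolding u_def S_def by (simp add: right_diff_distrib sum_subtractf sum_distrib_right[symmetric] wsum wsum')
  have wu0': "(\<Sum>a=Suc 0..N. w a * u a) = 0" using wu0 by simp
  have e1: "(1 / real N) * (\<Sum>l=1..N. v (J l)) - S = (1 / real N) * (\<Sum>l=1..N. u (J l))" for J
    using Npos by (simp add: u_def sum_subtractf field_simps)
  have inner: "(\<Sum>J\<in>{1..N} \<rightarrow>\<^sub>E {1..N}. (\<Prod>q=1..N. w (J q)) * (u (J l) * u (J l')))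
      = (if l = l' then V else 0)" if l: "l \<in> {1..N}" "l' \<in> {1..N}" for l l'
  proof -
    have "(\<Sum>J\<in>{1..N} \<rightarrow>\<^sub>E {1..N}. (\<Prod>q=1..N. w (J q)) * (u (J l) * u (J l')))
        = (\<Sum>J\<in>{1..N} \<rightarrow>\<^sub>E {1..N}. \<Prod>q=1..N. w (J q) * H l l' q (J q))"
    proof (intro sum.cong refl)
      fix J
      have "(\<Prod>q=1..N. H l l' q (J q)) = u (J l) * u (J l')"
        using prod_two[of "{1..N}" l l' "\<lambda>q. H l l' q (J q)"] l by (auto simp: H_def power2_eq_square)
      thus "(\<Prod>q=1..N. w (J q)) * (u (J l) * u (J l')) = (\<Prod>q=1..N. w (J q) * H l l' q (J q))"
        by (simp add: prod.distrib)
    qed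
    also have "\<dots> = (\<Prod>q=1..N. \<Sum>a=1..N. w a * H l l' q a)"
      by (rule prod_sum_PiE[symmetric]) auto
    also have "\<dots> = (if l = l' then (\<Sum>a=1..N. w a * H l l' l a) else (\<Sum>a=1..N. w a * H l l' l a) * (\<Sum>a=1..N. w a * H l l' l' a))"
      by (rule prod_two) (use l in \<open>auto simp: H_def wsum wsum'\<close>)
    also have "\<dots> = (if l = l' then V else 0)"
      by (auto simp: H_def V_def wu0 wu0')
    finally show ?thesis .
  qed
  have sw1: "(\<Sum>J\<in>{1..N} \<rightarrow>\<^sub>E {1..N}. \<Sum>l=1..N. \<Sum>l'=1..N. (\<Prod>q=1..N. w (J q)) * (u (J l) * u (J l')))
      = (\<Sum>l=1..N. \<Sum>J\<in>{1..N} \<rightarrow>\<^sub>E {1..N}. \<Sum>l'=1..N. (\<Prod>q=1..N. w (J q)) * (u (J l) * u (J l')))"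
    by (rule sum.swap)
  have sw2: "(\<Sum>l=1..N. \<Sum>J\<in>{1..N} \<rightarrow>\<^sub>E {1..N}. \<Sum>l'=1..N. (\<Prod>q=1..N. w (J q)) * (u (J l) * u (J l'))) = (\<Sum>l=1..N. \<Sum>l'=1..N. \<Sum>J\<in>{1..N} \<rightarrow>\<^sub>E {1..N}. (\<Prod>q=1..N. w (J q)) * (u (J l) * u (J l')))"
    by (intro sum.cong refl sum.swap)
  have step1: "(\<Prod>l=1..N. w (J l)) * ((1 / real N) * (\<Sum>l=1..N. v (J l)) - S)\<^sup>2
      = (1 / real N)\<^sup>2 * (\<Sum>l=1..N. \<Sum>l'=1..N. (\<Prod>q=1..N. w (J q)) * (u (J l) * u (J l')))" for J
  proof -
    have sq: "(\<Sum>l=1..N. u (J l))\<^sup>2 = (\<Sum>l=1..N. \<Sum>l'=1..N. u (J l) * u (J l'))"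
      by (simp add: power2_eq_square sum_product)
    have "(\<Prod>l=1..N. w (J l)) * ((1 / real N) * (\<Sum>l=1..N. v (J l)) - S)\<^sup>2
        = (1 / real N)\<^sup>2 * ((\<Prod>q=1..N. w (J q)) * (\<Sum>l=1..N. u (J l))\<^sup>2)"
      unfolding e1 power_mult_distrib by (simp only: mult_ac)
    also have "\<dots> = (1 / real N)\<^sup>2 * (\<Sum>l=1..N. \<Sum>l'=1..N. (\<Prod>q=1..N. w (J q)) * (u (J l) * u (J l')))"
      unfolding sq by (simp add: sum_distrib_left)
    finally show ?thesis .
  qed
  have "(\<Sum>J\<in>{1..N} \<rightarrow>\<^sub>E {1..N}. (\<Prod>l=1..N. w (J l)) *
            ((1 / real N) * (\<Sum>l=1..N. v (J l)) - S)\<^sup>2)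
      = (\<Sum>J\<in>{1..N} \<rightarrow>\<^sub>E {1..N}. (1 / real N)\<^sup>2 * (\<Sum>l=1..N. \<Sum>l'=1..N. (\<Prod>q=1..N. w (J q)) * (u (J l) * u (J l'))))"
    by (intro sum.cong refl step1)
  also have "\<dots> = (1 / real N)\<^sup>2 * (\<Sum>J\<in>{1..N} \<rightarrow>\<^sub>E {1..N}. \<Sum>l=1..N. \<Sum>l'=1..N. (\<Prod>q=1..N. w (J q)) * (u (J l) * u (J l')))"
    by (rule sum_distrib_left[symmetric])
  also have "\<dots> = (1 / real N)\<^sup>2 * (\<Sum>l=1..N. \<Sum>l'=1..N. \<Sum>J\<in>{1..N} \<rightarrow>\<^sub>E {1..N}. (\<Prod>q=1..N. w (J q)) * (u (J l) * u (J l')))"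
    by (simp only: sw1 sw2)
  also have "\<dots> = (1 / real N)\<^sup>2 * (\<Sum>l=1..N. \<Sum>l'=1..N. (if l = l' then V else 0))"
    apply (rule arg_cong[where f="\<lambda>x. (1/real N)\<^sup>2 * x"])
    apply (rule sum.cong[OF refl])
    apply (rule sum.cong[OF refl])
    apply (rule inner)
     apply assumption+
    done
  also have "\<dots> = V / real N" using Npos by (simp add: power2_eq_square)
  also have "V \<le> B\<^sup>2"
  proof -
    have "V = (\<Sum>a=1..N. w a * (v a)\<^sup>2) - S\<^sup>2"
    proof -
      have "V = (\<Sum>a=1..N. w a * (v a)\<^sup>2 + (-2*S) * (w a * v a) + S\<^sup>2 * w a)"
        unfolding V_def u_def by (intro sum.cong refl) (simp add: power2_eq_square algebra_simps)
      also have "\<dots> = (\<Sum>a=1..N. w a * (v a)\<^sup>2) + (-2*S) * (\<Sum>a=1..N. w a * v a) + S\<^sup>2 * (\<Sum>a=1..N. w a)"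
        by (simp only: sum.distrib sum_distrib_left)
      also have "\<dots> = (\<Sum>a=1..N. w a * (v a)\<^sup>2) - S\<^sup>2"
        unfolding wsum S_def[symmetric] by (simp add: power2_eq_square)
      finally show ?thesis .
    qed
    also have "\<dots> \<le> (\<Sum>a=1..N. w a * (v a)\<^sup>2)" by simp
    also have "\<dots> \<le> (\<Sum>a=1..N. w a * B\<^sup>2)"
    proof (intro sum_mono mult_left_mono)
      fix a
      have "\<bar>v a\<bar>\<^sup>2 \<le> B\<^sup>2" using vb[of a] by (intro power_mono) auto
      thus "(v a)\<^sup>2 \<le> B\<^sup>2" by simp
    qed (use wnn in auto)
    also have "\<dots> = B\<^sup>2" by (simp add: sum_distrib_right[symmetric] wsum wsum')
    finally show ?thesis .
  qed
  hence "V / real N \<le> B\<^sup>2 / real N" using Npos by (simp add: divide_right_mono)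
  finally show ?thesis unfolding S_def .
qed



lemma ratio_dev:
  fixes A B c T Mb \<eta> \<delta> :: real
  assumes c: "c > 0" and B: "B > 0" and T: "\<bar>T\<bar> \<le> Mb" and \<eta>: "0 < \<eta>" "\<eta> \<le> 1/2"
    and \<delta>: "2 * \<eta> * (1 + Mb) \<le> \<delta>" and dev: "\<bar>A / B - T\<bar> > \<delta>"
  shows "1 \<le> ((A - c * T)\<^sup>2 + (B - c)\<^sup>2) / (\<eta>\<^sup>2 * c\<^sup>2)"
proof (rule ccontr)
  assume "\<not> ?thesis"
  hence lt: "(A - c * T)\<^sup>2 + (B - c)\<^sup>2 < \<eta>\<^sup>2 * c\<^sup>2" using c \<eta> by (simp add: field_simps)
  have "(A - c * T)\<^sup>2 \<le> \<eta>\<^sup>2 * c\<^sup>2" using lt zero_le_power2[of "B - c"] by linarith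
  hence "(A - c * T)\<^sup>2 \<le> (\<eta> * c)\<^sup>2" by (simp add: power_mult_distrib)
  hence a: "\<bar>A - c * T\<bar> \<le> \<eta> * c" using c \<eta> by (metis abs_le_square_iff abs_of_pos mult_pos_pos)
  have "(B - c)\<^sup>2 \<le> \<eta>\<^sup>2 * c\<^sup>2" using lt zero_le_power2[of "A - c * T"] by linarith
  hence "(B - c)\<^sup>2 \<le> (\<eta> * c)\<^sup>2" by (simp add: power_mult_distrib)
  hence b: "\<bar>B - c\<bar> \<le> \<eta> * c" using c \<eta> by (metis abs_le_square_iff abs_of_pos mult_pos_pos)
  have "\<eta> * c \<le> (1/2) * c" using \<eta> c by (intro mult_right_mono) auto
  hence Bc: "B \<ge> c / 2" using b by linarith
  have "\<bar>A / B - T\<bar> = \<bar>(A - c * T) - T * (B - c)\<bar> / B" using B by (simp add: field_simps abs_div)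
  also have "\<bar>(A - c * T) - T * (B - c)\<bar> \<le> \<eta> * c + Mb * (\<eta> * c)"
  proof -
    have "\<bar>T * (B - c)\<bar> \<le> Mb * (\<eta> * c)"
      unfolding abs_mult using T b by (intro mult_mono) auto
    thus ?thesis using a by linarith
  qed
  hence "\<bar>(A - c * T) - T * (B - c)\<bar> / B \<le> (\<eta> * c + Mb * (\<eta> * c)) / B" using B by (simp add: divide_right_mono)
  also have "\<dots> \<le> (\<eta> * c + Mb * (\<eta> * c)) / (c / 2)"
    using B Bc c \<eta> T by (intro divide_left_mono) (auto intro!: mult_nonneg_nonneg add_nonneg_nonneg)
  also have "\<dots> = 2 * \<eta> * (1 + Mb)" using c by (simp add: field_simps)
  finally show False using \<delta> dev by linarith
qed

lemma point_bound:
  fixes p v :: "nat \<Rightarrow> real" and N :: nat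
  assumes N: "N \<ge> 1" and p: "\<And>i. i \<in> {1..N} \<Longrightarrow> p i > 0" and vb: "\<And>a. \<bar>v a\<bar> \<le> Mb"
    and c: "c > 0" and T: "\<bar>T\<bar> \<le> Mb" and \<eta>: "0 < \<eta>" "\<eta> \<le> 1/2"
    and \<delta>: "2 * \<eta> * (1 + Mb) \<le> eps/2" and eps: "eps > 0"
  shows "(\<Sum>J\<in>{1..N} \<rightarrow>\<^sub>E {1..N}. (\<Prod>l=1..N. p (J l) / (\<Sum>j=1..N. p j)) *
            (if \<bar>(1 / real N) * (\<Sum>l=1..N. v (J l)) - T\<bar> > eps then 1 else 0))
     \<le> 4 * Mb\<^sup>2 / (real N * eps\<^sup>2) +
       (((1/real N) * (\<Sum>i=1..N. p i * v i) - c * T)\<^sup>2 + ((1/real N) * (\<Sum>i=1..N. p i) - c)\<^sup>2) / (\<eta>\<^sup>2 * c\<^sup>2)"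
proof -
  define P where "P = (\<Sum>j=1..N. p j)"
  define w where "w a = p a / P" for a
  define S where "S = (\<Sum>a=1..N. w a * v a)"
  define A where "A = (1/real N) * (\<Sum>i=1..N. p i * v i)"
  define B where "B = (1/real N) * (\<Sum>i=1..N. p i)"
  define G where "G = ((A - c * T)\<^sup>2 + (B - c)\<^sup>2) / (\<eta>\<^sup>2 * c\<^sup>2)"
  have Npos: "real N > 0" using N by simp
  have Ppos: "P > 0" unfolding P_def using N p by (intro sum_pos) auto
  have wnn: "w a \<ge> 0" if "a \<in> {1..N}" for a using p[OF that] Ppos by (simp add: w_def)
  have wsum: "(\<Sum>a=1..N. w a) = 1" unfolding w_def sum_divide_distrib[symmetric] P_def[symmetric] using Ppos by simp
  have Gnn: "G \<ge> 0" unfolding G_def by simp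
  have Bpos: "B > 0" using Npos Ppos unfolding B_def P_def by simp
  have SAB: "S = A / B" unfolding S_def A_def B_def w_def P_def
    using Npos by (simp add: sum_divide_distrib[symmetric] field_simps)
  have Pone: "(\<Sum>J\<in>{1..N} \<rightarrow>\<^sub>E {1..N}. (\<Prod>l=1..N. w (J l))) = 1"
    using prod_sum_PiE[of "{1..N}" "\<lambda>_. {1..N}" "\<lambda>_ a. w a"] wsum by simp
  have ind: "(if \<bar>(1 / real N) * (\<Sum>l=1..N. v (J l)) - T\<bar> > eps then 1 else 0 :: real)
      \<le> (4 / eps\<^sup>2) * ((1 / real N) * (\<Sum>l=1..N. v (J l)) - S)\<^sup>2 + G" for J
  proof (cases "\<bar>(1 / real N) * (\<Sum>l=1..N. v (J l)) - T\<bar> > eps")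
    case True
    note dv = True
    show ?thesis
    proof (cases "\<bar>S - T\<bar> > eps/2")
      case True
      have "1 \<le> G" unfolding G_def
        by (rule ratio_dev[OF c Bpos T \<eta> \<delta>]) (use True SAB in simp)
      moreover have "0 \<le> (4 / eps\<^sup>2) * ((1 / real N) * (\<Sum>l=1..N. v (J l)) - S)\<^sup>2" by simp
      moreover have "(if \<bar>(1 / real N) * (\<Sum>l=1..N. v (J l)) - T\<bar> > eps then 1 else 0 :: real) = 1"
        using dv by simp
      ultimately show ?thesis by linarith
    next
      case False
      hence "\<bar>(1 / real N) * (\<Sum>l=1..N. v (J l)) - S\<bar> \<ge> eps/2" using \<open>\<bar>_ - T\<bar> > eps\<close> by linarith
      hence "(eps/2)\<^sup>2 \<le> ((1 / real N) * (\<Sum>l=1..N. v (J l)) - S)\<^sup>2"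
        using eps by (metis abs_ge_zero less_le_not_le power2_abs power_mono half_gt_zero_iff less_le)
      hence "1 \<le> (4 / eps\<^sup>2) * ((1 / real N) * (\<Sum>l=1..N. v (J l)) - S)\<^sup>2"
        using eps by (simp add: field_simps power2_eq_square)
      thus ?thesis using Gnn \<open>\<bar>_ - T\<bar> > eps\<close> by simp
    qed
  next
    case False
    thus ?thesis using Gnn by simp
  qed
  have "(\<Sum>J\<in>{1..N} \<rightarrow>\<^sub>E {1..N}. (\<Prod>l=1..N. p (J l) / (\<Sum>j=1..N. p j)) *
            (if \<bar>(1 / real N) * (\<Sum>l=1..N. v (J l)) - T\<bar> > eps then 1 else 0))
      = (\<Sum>J\<in>{1..N} \<rightarrow>\<^sub>E {1..N}. (\<Prod>l=1..N. w (J l)) *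
            (if \<bar>(1 / real N) * (\<Sum>l=1..N. v (J l)) - T\<bar> > eps then 1 else 0))"
    unfolding w_def P_def ..
  also have "\<dots> \<le> (\<Sum>J\<in>{1..N} \<rightarrow>\<^sub>E {1..N}. (\<Prod>l=1..N. w (J l)) *
            ((4 / eps\<^sup>2) * ((1 / real N) * (\<Sum>l=1..N. v (J l)) - S)\<^sup>2 + G))"
    by (intro sum_mono mult_left_mono ind prod_nonneg) (auto simp: PiE_iff intro!: wnn)
  also have "\<dots> = (4 / eps\<^sup>2) * (\<Sum>J\<in>{1..N} \<rightarrow>\<^sub>E {1..N}. (\<Prod>l=1..N. w (J l)) * ((1 / real N) * (\<Sum>l=1..N. v (J l)) - S)\<^sup>2)
      + G * (\<Sum>J\<in>{1..N} \<rightarrow>\<^sub>E {1..N}. (\<Prod>l=1..N. w (J l)))"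
    by (simp add: distrib_left sum.distrib sum_distrib_left sum_distrib_right mult_ac)
  also have "\<dots> \<le> (4 / eps\<^sup>2) * (Mb\<^sup>2 / real N) + G"
  proof -
    have rv: "(\<Sum>J\<in>{1..N} \<rightarrow>\<^sub>E {1..N}. (\<Prod>l=1..N. w (J l)) * ((1 / real N) * (\<Sum>l=1..N. v (J l)) - S)\<^sup>2) \<le> Mb\<^sup>2 / real N"
      unfolding S_def by (rule resample_var[OF N _ wsum vb]) (use wnn in auto)
    have "(4 / eps\<^sup>2) * (\<Sum>J\<in>{1..N} \<rightarrow>\<^sub>E {1..N}. (\<Prod>l=1..N. w (J l)) * ((1 / real N) * (\<Sum>l=1..N. v (J l)) - S)\<^sup>2) \<le> (4 / eps\<^sup>2) * (Mb\<^sup>2 / real N)"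
      by (rule mult_left_mono[OF rv]) simp
    thus ?thesis unfolding Pone by simp
  qed
  also have "\<dots> = 4 * Mb\<^sup>2 / (real N * eps\<^sup>2) + G" by simp
  finally show ?thesis unfolding G_def A_def B_def .
qed



lemma mean_sq_PiM:
  fixes M :: "'a measure" and h :: "'a \<Rightarrow> real" and J :: "'i set"
  assumes P: "prob_space M" and J: "finite J" "J \<noteq> {}" and hm[measurable]: "h \<in> borel_measurable M"
    and hb: "\<And>x. x \<in> space M \<Longrightarrow> \<bar>h x\<bar> \<le> B"
  shows "integrable (PiM J (\<lambda>_. M)) (\<lambda>z. ((1 / real (card J)) * (\<Sum>i\<in>J. h (z i)) - integral\<^sup>L M h)\<^sup>2)"
    and "(\<integral>z. ((1 / real (card J)) * (\<Sum>i\<in>J. h (z i)) - integral\<^sup>L M h)\<^sup>2 \<partial>PiM J (\<lambda>_. M))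
         \<le> (1 / real (card J)) * (\<integral>x. (h x)\<^sup>2 \<partial>M)"
proof -
  interpret prob_space M by (rule P)
  interpret PP: prob_space "PiM J (\<lambda>_. M)" by (rule prob_space_PiM) (rule P)
  define m where "m = integral\<^sup>L M h"
  define n where "n = real (card J)"
  have npos: "n > 0" using J by (simp add: n_def card_gt_0_iff)
  have ih: "integrable M h" using hb by (intro integrable_const_bound[where B=B]) auto
  have ih2: "integrable M (\<lambda>x. (h x)\<^sup>2)"
  proof (intro integrable_const_bound[where B="B\<^sup>2"])
    show "AE x in M. norm ((h x)\<^sup>2) \<le> B\<^sup>2"
    proof (rule AE_I2)
      fix x assume "x \<in> space M"
      hence "\<bar>h x\<bar>\<^sup>2 \<le> B\<^sup>2" using hb[of x] by (intro power_mono) auto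
      thus "norm ((h x)\<^sup>2) \<le> B\<^sup>2" by simp
    qed
  qed simp
  have mb: "\<bar>m\<bar> \<le> B"
  proof -
    have "\<bar>m\<bar> \<le> (\<integral>x. \<bar>h x\<bar> \<partial>M)" unfolding m_def by (rule integral_abs_bound)
    also have "\<dots> \<le> (\<integral>x. B \<partial>M)" using ih hb by (intro integral_mono) auto
    finally show ?thesis by (simp add: prob_space)
  qed
  have eq: "(1 / n) * (\<Sum>i\<in>J. h (z i)) - m = (1 / n) * (\<Sum>i\<in>J. (h (z i) - m))" for z
    using npos by (simp add: sum_subtractf n_def field_simps)
  have bnd: "\<bar>(1 / n) * (\<Sum>i\<in>J. h (z i)) - m\<bar> \<le> 2 * B" if z: "z \<in> space (PiM J (\<lambda>_. M))" for z
  proof -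
    have "\<bar>\<Sum>i\<in>J. h (z i)\<bar> \<le> (\<Sum>i\<in>J. B)"
      using z by (intro order.trans[OF sum_abs] sum_mono hb) (auto simp: space_PiM PiE_iff)
    hence "\<bar>(1 / n) * (\<Sum>i\<in>J. h (z i))\<bar> \<le> B" using npos by (simp add: n_def abs_mult field_simps)
    thus ?thesis using mb by linarith
  qed
  show int: "integrable (PiM J (\<lambda>_. M)) (\<lambda>z. ((1 / real (card J)) * (\<Sum>i\<in>J. h (z i)) - integral\<^sup>L M h)\<^sup>2)"
  proof (intro PP.integrable_const_bound[where B="(2*B)\<^sup>2"])
    show "AE z in PiM J (\<lambda>_. M). norm (((1 / real (card J)) * (\<Sum>i\<in>J. h (z i)) - integral\<^sup>L M h)\<^sup>2) \<le> (2*B)\<^sup>2"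
    proof (rule AE_I2)
      fix z assume "z \<in> space (PiM J (\<lambda>_. M))"
      hence "\<bar>(1 / n) * (\<Sum>i\<in>J. h (z i)) - m\<bar>\<^sup>2 \<le> (2*B)\<^sup>2" using bnd by (intro power_mono) auto
      thus "norm (((1 / real (card J)) * (\<Sum>i\<in>J. h (z i)) - integral\<^sup>L M h)\<^sup>2) \<le> (2*B)\<^sup>2"
        by (simp add: n_def m_def)
    qed
  qed (use J in measurable)
  have "(\<integral>z. ((1 / n) * (\<Sum>i\<in>J. h (z i)) - m)\<^sup>2 \<partial>PiM J (\<lambda>_. M))
      = (\<integral>z. (1 / n)\<^sup>2 * (\<Sum>i\<in>J. (h (z i) - m))\<^sup>2 \<partial>PiM J (\<lambda>_. M))"
    by (simp only: eq power_mult_distrib)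
  also have "\<dots> = (1 / n)\<^sup>2 * (\<integral>z. (\<Sum>i\<in>J. (h (z i) - m))\<^sup>2 \<partial>PiM J (\<lambda>_. M))"
    by simp
  also have "(\<integral>z. (\<Sum>i\<in>J. (h (z i) - m))\<^sup>2 \<partial>PiM J (\<lambda>_. M)) = n * (\<integral>x. (h x - m)\<^sup>2 \<partial>M)"
    unfolding m_def n_def by (rule var_PiM[OF P J(1) hm hb])
  also have "(\<integral>x. (h x - m)\<^sup>2 \<partial>M) = (\<integral>x. (h x)\<^sup>2 \<partial>M) - m\<^sup>2"
    unfolding m_def using variance_eq[OF ih ih2] .
  also have "(1 / n)\<^sup>2 * (n * ((\<integral>x. (h x)\<^sup>2 \<partial>M) - m\<^sup>2)) \<le> (1 / n) * (\<integral>x. (h x)\<^sup>2 \<partial>M)"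
  proof -
    have "(1 / n)\<^sup>2 * (n * ((\<integral>x. (h x)\<^sup>2 \<partial>M) - m\<^sup>2)) = (1 / n) * ((\<integral>x. (h x)\<^sup>2 \<partial>M) - m\<^sup>2)"
      using npos by (simp add: power2_eq_square)
    also have "\<dots> \<le> (1 / n) * (\<integral>x. (h x)\<^sup>2 \<partial>M)" using npos by (intro mult_left_mono) auto
    finally show ?thesis .
  qed
  finally show "(\<integral>z. ((1 / real (card J)) * (\<Sum>i\<in>J. h (z i)) - integral\<^sup>L M h)\<^sup>2 \<partial>PiM J (\<lambda>_. M))
         \<le> (1 / real (card J)) * (\<integral>x. (h x)\<^sup>2 \<partial>M)" unfolding n_def m_def .
qed



definition rr :: "real \<Rightarrow> real" where "rr t = 2 / sqrt 3 * exp (t\<^sup>2/6)"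

lemma prob_gauss_vec: "prob_space (gauss_vec D)"
  unfolding gauss_vec_def by (rule prob_space_PiM) (rule prob_std_gauss)

lemma sets_gauss_vec[measurable_cong]: "sets (gauss_vec D) = sets (PiM {..<D} (\<lambda>_. borel))"
  unfolding gauss_vec_def by (rule sets_PiM_cong) auto

lemma c2_int_L: "(\<integral>x. exp (-(t-x)\<^sup>2) \<partial>std_gauss) = exp (-t\<^sup>2/3) / sqrt 3"
proof -
  have "(\<integral>x. exp (-(t-x)\<^sup>2) \<partial>std_gauss) = enn2real (\<integral>\<^sup>+x. ennreal (exp (-(t-x)\<^sup>2)) \<partial>std_gauss)"
    by (rule integral_eq_nn_integral) auto
  also have "\<dots> = exp (-t\<^sup>2/3) / sqrt 3" by (simp add: c2_int)
  finally show ?thesis .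
qed

lemma sq_int: "(\<integral>x. (exp (- sqdist D y x / 2))\<^sup>2 \<partial>gauss_vec D) = (\<Prod>j<D. exp (-(y j)\<^sup>2/3) / sqrt 3)"
proof -
  interpret prob_space std_gauss by (rule prob_std_gauss)
  interpret PS: product_sigma_finite "\<lambda>_. std_gauss" by (simp add: product_sigma_finite_def sigma_finite_measure_axioms)
  have e: "(exp (- sqdist D y x / 2))\<^sup>2 = (\<Prod>j<D. exp (-(y j - x j)\<^sup>2))" for x
  proof -
    have "(exp (- sqdist D y x / 2))\<^sup>2 = exp (- sqdist D y x)"
      by (simp add: power2_eq_square mult_exp_exp)
    also have "\<dots> = exp (\<Sum>j<D. -(y j - x j)\<^sup>2)" unfolding sqdist_def by (simp add: sum_negf)
    also have "\<dots> = (\<Prod>j<D. exp (-(y j - x j)\<^sup>2))" by (simp add: exp_sum)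
    finally show ?thesis .
  qed
  have int: "integrable std_gauss (\<lambda>x. exp (-(t-x)\<^sup>2))" for t
    by (intro integrable_const_bound[where B=1]) auto
  have "(\<integral>x. (exp (- sqdist D y x / 2))\<^sup>2 \<partial>gauss_vec D) = (\<integral>x. (\<Prod>j<D. exp (-(y j - x j)\<^sup>2)) \<partial>PiM {..<D} (\<lambda>_. std_gauss))"
    unfolding gauss_vec_def e ..
  also have "\<dots> = (\<Prod>j<D. (\<integral>x. exp (-(y j - x)\<^sup>2) \<partial>std_gauss))"
    using PS.product_integral_prod[of "{..<D}" "\<lambda>j x. exp (-(y j - x)\<^sup>2)"] int by simp
  also have "\<dots> = (\<Prod>j<D. exp (-(y j)\<^sup>2/3) / sqrt 3)" by (simp add: c2_int_L)
  finally show ?thesis .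
qed

lemma ratio_rr: "(\<Prod>j<D. exp (-(y j)\<^sup>2/3) / sqrt 3) / (\<Prod>j<D. c1 (y j))\<^sup>2 = (\<Prod>j<D. rr (y j))"
proof -
  have f: "exp (-t\<^sup>2/3) / sqrt 3 / (c1 t)\<^sup>2 = rr t" for t
  proof -
    have a: "exp (-t\<^sup>2/2) = 2 * (c1 t)\<^sup>2"
      by (simp add: c1_def power_divide power2_eq_square mult_exp_exp)
    have b: "exp (-t\<^sup>2/3) = exp (-t\<^sup>2/2) * exp (t\<^sup>2/6)" by (simp add: mult_exp_exp)
    show ?thesis unfolding b a rr_def using c1_pos[of t] by (simp add: field_simps)
  qed
  show ?thesis by (simp add: f[symmetric] prod_dividef power_mult_distrib prod_power_distrib prod.distrib)
qed


lemma inner_X: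
  fixes e :: "'k::finite \<Rightarrow> nat" and f :: "real^'k \<Rightarrow> real" and y :: "nat \<Rightarrow> real"
  assumes e: "bij_betw e UNIV {..<CARD('k)}" and KD: "CARD('k) \<le> D" and N: "N \<ge> 1"
    and fm[measurable]: "f \<in> borel_measurable borel" and fb: "\<And>x. \<bar>f x\<bar> \<le> Mb" and \<eta>: "\<eta> > 0"
  shows "(\<integral>\<^sup>+z. ennreal (((((1/real N) * (\<Sum>i=1..N. exp (- sqdist D y (z i) / 2) * f (proj e (z i))))
              - (\<Prod>j<D. c1 (y j)) * (\<integral>z. f (\<chi> i. y (e i)/2 + sqrt (1/2) * z (e i)) \<partial>gauss_vec CARD('k)))\<^sup>2
            + ((1/real N) * (\<Sum>i=1..N. exp (- sqdist D y (z i) / 2)) - (\<Prod>j<D. c1 (y j)))\<^sup>2)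
            / (\<eta>\<^sup>2 * (\<Prod>j<D. c1 (y j))\<^sup>2)) \<partial>PiM {1..N} (\<lambda>_. gauss_vec D))
     \<le> ennreal ((Mb\<^sup>2 + 1) / (real N * \<eta>\<^sup>2) * (\<Prod>j<D. rr (y j)))"
proof -
  interpret G: prob_space "gauss_vec D" by (rule prob_gauss_vec)
  interpret GK: prob_space "gauss_vec CARD('k)" by (rule prob_gauss_vec)
  interpret PP: prob_space "PiM {1..N} (\<lambda>_. gauss_vec D)" by (rule prob_space_PiM) (rule prob_gauss_vec)
  define c where "c = (\<Prod>j<D. c1 (y j))"
  define T where "T = (\<integral>z. f (\<chi> i. y (e i)/2 + sqrt (1/2) * z (e i)) \<partial>gauss_vec CARD('k))"
  define h where "h \<xi> = exp (- sqdist D y \<xi> / 2) * f (proj e \<xi>)" for \<xi>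
  define h1 where "h1 \<xi> = exp (- sqdist D y \<xi> / 2)" for \<xi>
  define c2p where "c2p = (\<Prod>j<D. exp (-(y j)\<^sup>2/3) / sqrt 3)"
  have cpos: "c > 0" unfolding c_def by (intro prod_pos) (simp add: c1_pos)
  have Mb0: "Mb \<ge> 0" using fb[of 0] by linarith
  have eK: "e i \<in> {..<CARD('k)}" for i using bij_betw_apply[OF e] by auto
  have eD: "e i \<in> {..<D}" for i using eK[of i] KD by simp
  have h1m[measurable]: "h1 \<in> borel_measurable (gauss_vec D)"
    unfolding h1_def gauss_vec_def sqdist_def by measurable
  have Fm: "(\<lambda>x. f (proj e x)) \<in> borel_measurable (gauss_vec D)"
    unfolding gauss_vec_def using eD by (intro proj_measurable[OF _ fm]) auto
  have hm[measurable]: "h \<in> borel_measurable (gauss_vec D)"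
    unfolding h_def using h1m[unfolded h1_def] Fm by measurable
  have sq0: "sqdist D y \<xi> \<ge> 0" for \<xi> unfolding sqdist_def by (intro sum_nonneg) auto
  have h1b: "\<bar>h1 \<xi>\<bar> \<le> 1" for \<xi> using sq0[of \<xi>] by (simp add: h1_def)
  have hb: "\<bar>h \<xi>\<bar> \<le> Mb" for \<xi>
  proof -
    have "\<bar>h \<xi>\<bar> = \<bar>h1 \<xi>\<bar> * \<bar>f (proj e \<xi>)\<bar>" by (simp add: h_def h1_def abs_mult)
    also have "\<dots> \<le> 1 * Mb" using h1b fb by (intro mult_mono) auto
    finally show ?thesis by simp
  qed
  have mh: "integral\<^sup>L (gauss_vec D) h = c * T"
    unfolding h_def c_def T_def by (rule mean_identity[OF e KD fm])
  have mh1: "integral\<^sup>L (gauss_vec D) h1 = c"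
    using mean_identity[OF e KD, where f="\<lambda>_. 1" and y=y] unfolding h1_def c_def by (simp add: GK.prob_space)
  have card: "card {1..N} = N" by simp
  have J: "finite {1..N}" "{1..N} \<noteq> {}" using N by auto
  note A = mean_sq_PiM[OF prob_gauss_vec J hm, of Mb, unfolded card mh] 
  note B = mean_sq_PiM[OF prob_gauss_vec J h1m, of 1, unfolded card mh1]
  have iA: "integrable (PiM {1..N} (\<lambda>_. gauss_vec D)) (\<lambda>z. ((1 / real N) * (\<Sum>i=1..N. h (z i)) - c * T)\<^sup>2)"
    using A(1) hb by auto
  have iB: "integrable (PiM {1..N} (\<lambda>_. gauss_vec D)) (\<lambda>z. ((1 / real N) * (\<Sum>i=1..N. h1 (z i)) - c)\<^sup>2)"
    using B(1) h1b by auto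
  have lA: "(\<integral>z. ((1 / real N) * (\<Sum>i=1..N. h (z i)) - c * T)\<^sup>2 \<partial>PiM {1..N} (\<lambda>_. gauss_vec D)) \<le> (1 / real N) * (\<integral>x. (h x)\<^sup>2 \<partial>gauss_vec D)"
    using A(2) hb by auto
  have lB: "(\<integral>z. ((1 / real N) * (\<Sum>i=1..N. h1 (z i)) - c)\<^sup>2 \<partial>PiM {1..N} (\<lambda>_. gauss_vec D)) \<le> (1 / real N) * (\<integral>x. (h1 x)\<^sup>2 \<partial>gauss_vec D)"
    using B(2) h1b by auto
  have ih1sq: "integrable (gauss_vec D) (\<lambda>x. (h1 x)\<^sup>2)"
  proof (intro G.integrable_const_bound[where B=1])
    show "AE x in gauss_vec D. norm ((h1 x)\<^sup>2) \<le> 1"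
    proof (rule AE_I2)
      fix x have "\<bar>h1 x\<bar>\<^sup>2 \<le> 1\<^sup>2" using h1b[of x] by (intro power_mono) auto
      thus "norm ((h1 x)\<^sup>2) \<le> 1" by simp
    qed
  qed simp
  have ihsq: "integrable (gauss_vec D) (\<lambda>x. (h x)\<^sup>2)"
  proof (intro G.integrable_const_bound[where B="Mb\<^sup>2"])
    show "AE x in gauss_vec D. norm ((h x)\<^sup>2) \<le> Mb\<^sup>2"
    proof (rule AE_I2)
      fix x have "\<bar>h x\<bar>\<^sup>2 \<le> Mb\<^sup>2" using hb[of x] by (intro power_mono) auto
      thus "norm ((h x)\<^sup>2) \<le> Mb\<^sup>2" by simp
    qed
  qed simp
  have hsq: "(\<integral>x. (h x)\<^sup>2 \<partial>gauss_vec D) \<le> Mb\<^sup>2 * (\<integral>x. (h1 x)\<^sup>2 \<partial>gauss_vec D)"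
  proof -
    have "(\<integral>x. (h x)\<^sup>2 \<partial>gauss_vec D) \<le> (\<integral>x. Mb\<^sup>2 * (h1 x)\<^sup>2 \<partial>gauss_vec D)"
    proof (intro integral_mono ihsq)
      show "integrable (gauss_vec D) (\<lambda>x. Mb\<^sup>2 * (h1 x)\<^sup>2)" using ih1sq by simp
      fix x
      have "\<bar>f (proj e x)\<bar>\<^sup>2 \<le> Mb\<^sup>2" using fb by (intro power_mono) auto
      hence "(f (proj e x))\<^sup>2 \<le> Mb\<^sup>2" by simp
      hence "(h1 x)\<^sup>2 * (f (proj e x))\<^sup>2 \<le> (h1 x)\<^sup>2 * Mb\<^sup>2" by (intro mult_left_mono) auto
      thus "(h x)\<^sup>2 \<le> Mb\<^sup>2 * (h1 x)\<^sup>2" by (simp add: h_def h1_def power_mult_distrib mult_ac)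
    qed
    thus ?thesis by simp
  qed
  have h1sq: "(\<integral>x. (h1 x)\<^sup>2 \<partial>gauss_vec D) = c2p" unfolding h1_def c2p_def by (rule sq_int)
  have c2p0: "c2p \<ge> 0" unfolding c2p_def by (intro prod_nonneg) auto
  define GG where "GG z = ((((1/real N) * (\<Sum>i=1..N. h (z i))) - c * T)\<^sup>2 + ((1/real N) * (\<Sum>i=1..N. h1 (z i)) - c)\<^sup>2) / (\<eta>\<^sup>2 * c\<^sup>2)" for z
  have iG: "integrable (PiM {1..N} (\<lambda>_. gauss_vec D)) GG"
    unfolding GG_def using iA iB by (intro integrable_divide) auto
  have "(\<integral>z. GG z \<partial>PiM {1..N} (\<lambda>_. gauss_vec D))
      = ((\<integral>z. ((1 / real N) * (\<Sum>i=1..N. h (z i)) - c * T)\<^sup>2 \<partial>PiM {1..N} (\<lambda>_. gauss_vec D))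
         + (\<integral>z. ((1 / real N) * (\<Sum>i=1..N. h1 (z i)) - c)\<^sup>2 \<partial>PiM {1..N} (\<lambda>_. gauss_vec D))) / (\<eta>\<^sup>2 * c\<^sup>2)"
    unfolding GG_def using iA iB by simp
  also have "\<dots> \<le> ((1 / real N) * (Mb\<^sup>2 * c2p) + (1 / real N) * c2p) / (\<eta>\<^sup>2 * c\<^sup>2)"
  proof (intro divide_right_mono add_mono)
    show "(\<integral>z. ((1 / real N) * (\<Sum>i=1..N. h (z i)) - c * T)\<^sup>2 \<partial>PiM {1..N} (\<lambda>_. gauss_vec D)) \<le> (1 / real N) * (Mb\<^sup>2 * c2p)"
      using lA hsq unfolding h1sq by (smt (verit) N divide_nonneg_nonneg mult_left_mono of_nat_0_le_iff)
    show "(\<integral>z. ((1 / real N) * (\<Sum>i=1..N. h1 (z i)) - c)\<^sup>2 \<partial>PiM {1..N} (\<lambda>_. gauss_vec D)) \<le> (1 / real N) * c2p"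
      using lB unfolding h1sq .
  qed simp
  also have "\<dots> = (Mb\<^sup>2 + 1) / (real N * \<eta>\<^sup>2) * (c2p / c\<^sup>2)"
    using cpos \<eta> N by (simp add: field_simps)
  also have "c2p / c\<^sup>2 = (\<Prod>j<D. rr (y j))" unfolding c2p_def c_def by (rule ratio_rr)
  finally have le: "(\<integral>z. GG z \<partial>PiM {1..N} (\<lambda>_. gauss_vec D)) \<le> (Mb\<^sup>2 + 1) / (real N * \<eta>\<^sup>2) * (\<Prod>j<D. rr (y j))" .
  have "(\<integral>\<^sup>+z. ennreal (GG z) \<partial>PiM {1..N} (\<lambda>_. gauss_vec D)) = ennreal (\<integral>z. GG z \<partial>PiM {1..N} (\<lambda>_. gauss_vec D))"
    by (rule nn_integral_eq_integral[OF iG]) (auto simp: GG_def)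
  also have "\<dots> \<le> ennreal ((Mb\<^sup>2 + 1) / (real N * \<eta>\<^sup>2) * (\<Prod>j<D. rr (y j)))"
    using le by (rule ennreal_leI)
  finally show ?thesis unfolding GG_def h_def h1_def c_def T_def .
qed



lemma rr_meas[measurable]: "rr \<in> borel_measurable borel" unfolding rr_def by measurable

lemma rr_int1: "(\<integral>\<^sup>+a. ennreal (rr (a + b)) \<partial>std_gauss) = ennreal (sqrt 2 * exp (b\<^sup>2/4))"
proof -
  have "(\<integral>\<^sup>+a. ennreal (rr (a + b)) \<partial>std_gauss) = (\<integral>\<^sup>+a. ennreal (2 / sqrt 3) * ennreal (exp ((b + a)\<^sup>2/6)) \<partial>std_gauss)"
  proof (intro nn_integral_cong)
    fix a
    have e: "rr (a + b) = 2 / sqrt 3 * exp ((b + a)\<^sup>2/6)" by (simp add: rr_def add.commute)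
    show "ennreal (rr (a + b)) = ennreal (2 / sqrt 3) * ennreal (exp ((b + a)\<^sup>2/6))"
      unfolding e by (rule ennreal_mult') simp
  qed
  also have "\<dots> = ennreal (2 / sqrt 3) * (\<integral>\<^sup>+a. ennreal (exp ((b + a)\<^sup>2/6)) \<partial>std_gauss)"
    by (rule nn_integral_cmult) measurable
  also have "\<dots> = ennreal (2 / sqrt 3) * ennreal (sqrt (3/2) * exp (b\<^sup>2/4))" by (simp only: rho_int)
  also have "\<dots> = ennreal (2 / sqrt 3 * (sqrt (3/2) * exp (b\<^sup>2/4)))" by (rule ennreal_mult'[symmetric]) simp
  also have "2 / sqrt 3 * (sqrt (3/2) * exp (b\<^sup>2/4)) = sqrt 2 * exp (b\<^sup>2/4)"
  proof -
    have "2 / sqrt 3 * sqrt (3/2) = sqrt 2"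
      by (simp add: real_sqrt_divide field_simps)
    thus ?thesis by (metis mult.assoc)
  qed
  finally show ?thesis .
qed

lemma rr_int2: "(\<integral>\<^sup>+b. ennreal (sqrt 2 * exp (b\<^sup>2/4)) \<partial>std_gauss) = 2"
proof -
  have "(\<integral>\<^sup>+b. ennreal (sqrt 2 * exp (b\<^sup>2/4)) \<partial>std_gauss) = (\<integral>\<^sup>+b. ennreal (sqrt 2) * ennreal (exp (b\<^sup>2/4)) \<partial>std_gauss)"
    by (intro nn_integral_cong) (simp add: ennreal_mult)
  also have "\<dots> = ennreal (sqrt 2) * (\<integral>\<^sup>+b. ennreal (exp (b\<^sup>2/4)) \<partial>std_gauss)"
    by (rule nn_integral_cmult) measurable
  also have "\<dots> = ennreal (sqrt 2) * ennreal (sqrt 2)" by (simp only: fin_int)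
  also have "\<dots> = 2" by (simp add: ennreal_mult[symmetric])
  finally show ?thesis .
qed

lemma comp2_meas:
  assumes "i \<in> I" "j < D"
  shows "(\<lambda>x. x i j) \<in> borel_measurable (PiM I (\<lambda>_. gauss_vec D))"
proof -
  have a: "(\<lambda>x. x i) \<in> measurable (PiM I (\<lambda>_. gauss_vec D)) (gauss_vec D)"
    using assms(1) by (rule measurable_component_singleton)
  have b: "(\<lambda>v. v j) \<in> borel_measurable (gauss_vec D)"
  proof -
    have jD: "j \<in> {..<D}" using assms(2) by simp
    have "(\<lambda>v. v j) \<in> measurable (PiM {..<D} (\<lambda>_. std_gauss)) std_gauss"
      using jD by (rule measurable_component_singleton)
    thus ?thesis unfolding gauss_vec_def by (simp add: measurable_cong_sets[OF refl sets_std_gauss])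
  qed
  show ?thesis using measurable_compose[OF a b] .
qed

lemma outer_int:
  assumes C: "C \<ge> 0"
  shows "(\<integral>\<^sup>+x. ennreal (C * (\<Prod>j<D. rr (x 0 j + x (Suc N) j))) \<partial>PiM {0, Suc N} (\<lambda>_. gauss_vec D))
    = ennreal (C * 2 ^ D)"
proof -
  interpret sg: prob_space std_gauss by (rule prob_std_gauss)
  interpret G: prob_space "gauss_vec D" by (rule prob_gauss_vec)
  interpret PS: product_sigma_finite "\<lambda>_. std_gauss" by (simp add: product_sigma_finite_def sg.sigma_finite_measure_axioms)
  interpret PG: product_sigma_finite "\<lambda>_. gauss_vec D" by (simp add: product_sigma_finite_def G.sigma_finite_measure_axioms)
  have rr0: "rr t \<ge> 0" for t by (simp add: rr_def)
  have inner: "(\<integral>\<^sup>+a. ennreal (\<Prod>j<D. rr (a j + b j)) \<partial>gauss_vec D) = ennreal (\<Prod>j<D. sqrt 2 * exp ((b j)\<^sup>2/4))" for b :: "nat \<Rightarrow> real"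
  proof -
    have "(\<integral>\<^sup>+a. ennreal (\<Prod>j<D. rr (a j + b j)) \<partial>gauss_vec D) = (\<integral>\<^sup>+a. (\<Prod>j\<in>{..<D}. (\<lambda>j t. ennreal (rr (t + b j))) j (a j)) \<partial>PiM {..<D} (\<lambda>_. std_gauss))"
      unfolding gauss_vec_def by (intro nn_integral_cong) (simp add: prod_ennreal rr0)
    also have "\<dots> = (\<Prod>j\<in>{..<D}. \<integral>\<^sup>+t. ennreal (rr (t + b j)) \<partial>std_gauss)"
      by (rule PS.product_nn_integral_prod) auto
    also have "\<dots> = (\<Prod>j\<in>{..<D}. ennreal (sqrt 2 * exp ((b j)\<^sup>2/4)))" by (simp only: rr_int1)
    also have "\<dots> = ennreal (\<Prod>j<D. sqrt 2 * exp ((b j)\<^sup>2/4))" by (simp add: prod_ennreal)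
    finally show ?thesis .
  qed
  have outer: "(\<integral>\<^sup>+b. ennreal (\<Prod>j<D. sqrt 2 * exp ((b j)\<^sup>2/4)) \<partial>gauss_vec D) = 2 ^ D"
  proof -
    have "(\<integral>\<^sup>+b. ennreal (\<Prod>j<D. sqrt 2 * exp ((b j)\<^sup>2/4)) \<partial>gauss_vec D) = (\<integral>\<^sup>+b. (\<Prod>j\<in>{..<D}. (\<lambda>j t. ennreal (sqrt 2 * exp (t\<^sup>2/4))) j (b j)) \<partial>PiM {..<D} (\<lambda>_. std_gauss))"
      unfolding gauss_vec_def by (intro nn_integral_cong) (simp add: prod_ennreal)
    also have "\<dots> = (\<Prod>j\<in>{..<D}. \<integral>\<^sup>+t. ennreal (sqrt 2 * exp (t\<^sup>2/4)) \<partial>std_gauss)"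
      by (rule PS.product_nn_integral_prod) auto
    also have "\<dots> = 2 ^ D" by (simp only: rr_int2) simp
    finally show ?thesis .
  qed
  have meas: "(\<lambda>x. ennreal (C * (\<Prod>j<D. rr (x 0 j + x (Suc N) j)))) \<in> borel_measurable (PiM (insert 0 {Suc N}) (\<lambda>_. gauss_vec D))"
  proof -
    have "(\<lambda>x. \<Prod>j<D. rr (x 0 j + x (Suc N) j)) \<in> borel_measurable (PiM (insert 0 {Suc N}) (\<lambda>_. gauss_vec D))"
      by (intro borel_measurable_prod measurable_compose[OF _ rr_meas] borel_measurable_add comp2_meas) auto
    thus ?thesis by measurable
  qed
  have "(\<integral>\<^sup>+x. ennreal (C * (\<Prod>j<D. rr (x 0 j + x (Suc N) j))) \<partial>PiM (insert 0 {Suc N}) (\<lambda>_. gauss_vec D))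
      = (\<integral>\<^sup>+x. (\<integral>\<^sup>+a. ennreal (C * (\<Prod>j<D. rr (a j + x (Suc N) j))) \<partial>gauss_vec D) \<partial>PiM {Suc N} (\<lambda>_. gauss_vec D))"
    by (subst PG.product_nn_integral_insert[OF _ _ meas]) auto
  also have "\<dots> = (\<integral>\<^sup>+x. ennreal C * ennreal (\<Prod>j<D. sqrt 2 * exp ((x (Suc N) j)\<^sup>2/4)) \<partial>PiM {Suc N} (\<lambda>_. gauss_vec D))"
  proof (intro nn_integral_cong)
    fix x
    have "(\<integral>\<^sup>+a. ennreal (C * (\<Prod>j<D. rr (a j + x (Suc N) j))) \<partial>gauss_vec D)
        = (\<integral>\<^sup>+a. ennreal C * ennreal (\<Prod>j<D. rr (a j + x (Suc N) j)) \<partial>gauss_vec D)"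
      using C by (intro nn_integral_cong) (rule ennreal_mult')
    also have "\<dots> = ennreal C * (\<integral>\<^sup>+a. ennreal (\<Prod>j<D. rr (a j + x (Suc N) j)) \<partial>gauss_vec D)"
      by (rule nn_integral_cmult) (unfold gauss_vec_def, measurable)
    finally show "(\<integral>\<^sup>+a. ennreal (C * (\<Prod>j<D. rr (a j + x (Suc N) j))) \<partial>gauss_vec D) = ennreal C * ennreal (\<Prod>j<D. sqrt 2 * exp ((x (Suc N) j)\<^sup>2/4))"
      by (simp only: inner)
  qed
  also have "\<dots> = ennreal C * (\<integral>\<^sup>+x. ennreal (\<Prod>j<D. sqrt 2 * exp ((x (Suc N) j)\<^sup>2/4)) \<partial>PiM {Suc N} (\<lambda>_. gauss_vec D))"
  proof (rule nn_integral_cmult)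
    have fb: "(\<lambda>t::real. sqrt 2 * exp (t\<^sup>2/4)) \<in> borel_measurable borel" by measurable
    have cm: "(\<lambda>x. sqrt 2 * exp ((x (Suc N) j)\<^sup>2/4)) \<in> borel_measurable (PiM {Suc N} (\<lambda>_. gauss_vec D))" if "j < D" for j
      using measurable_compose[OF comp2_meas[OF _ that, of "Suc N" "{Suc N}"] fb] by simp
    have "(\<lambda>x. \<Prod>j<D. sqrt 2 * exp ((x (Suc N) j)\<^sup>2/4)) \<in> borel_measurable (PiM {Suc N} (\<lambda>_. gauss_vec D))"
      by (intro borel_measurable_prod cm) auto
    thus "(\<lambda>x. ennreal (\<Prod>j<D. sqrt 2 * exp ((x (Suc N) j)\<^sup>2/4))) \<in> borel_measurable (PiM {Suc N} (\<lambda>_. gauss_vec D))"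
      by measurable
  qed
  also have "(\<integral>\<^sup>+x. ennreal (\<Prod>j<D. sqrt 2 * exp ((x (Suc N) j)\<^sup>2/4)) \<partial>PiM {Suc N} (\<lambda>_. gauss_vec D))
      = (\<integral>\<^sup>+b. ennreal (\<Prod>j<D. sqrt 2 * exp ((b j)\<^sup>2/4)) \<partial>gauss_vec D)"
    by (rule PG.product_nn_integral_singleton) (unfold gauss_vec_def, measurable)
  also have "ennreal C * \<dots> = ennreal (C * 2 ^ D)"
  proof -
    have "ennreal (C * 2 ^ D) = ennreal C * ennreal (2 ^ D)" by (rule ennreal_mult'[OF C])
    also have "ennreal (2 ^ D) = 2 ^ D" by (simp add: ennreal_power[symmetric])
    finally show ?thesis by (simp only: outer)
  qed
  finally show ?thesis by simp
qed



lemma comp1_all[measurable]: "(\<lambda>v. v j) \<in> borel_measurable (gauss_vec D)"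
proof (cases "j < D")
  case True
  have jD: "j \<in> {..<D}" using True by simp
  have "(\<lambda>v. v j) \<in> measurable (PiM {..<D} (\<lambda>_. std_gauss)) std_gauss"
    using jD by (rule measurable_component_singleton)
  thus ?thesis unfolding gauss_vec_def by (simp add: measurable_cong_sets[OF refl sets_std_gauss])
next
  case False
  have "(\<lambda>v. v j) \<in> borel_measurable (gauss_vec D) \<longleftrightarrow> (\<lambda>v. undefined :: real) \<in> borel_measurable (gauss_vec D)"
    by (rule Sigma_Algebra.measurable_cong) (use False in \<open>auto simp: gauss_vec_def space_PiM PiE_def extensional_def\<close>)
  thus ?thesis by simp
qed

lemma comp2_all[measurable]: "(\<lambda>x. x i j) \<in> borel_measurable (PiM I (\<lambda>_. gauss_vec D))"
proof (cases "i \<in> I")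
  case True
  have a: "(\<lambda>x. x i) \<in> measurable (PiM I (\<lambda>_. gauss_vec D)) (gauss_vec D)"
    using True by (rule measurable_component_singleton)
  show ?thesis using measurable_compose[OF a comp1_all] .
next
  case False
  have "(\<lambda>x. x i j) \<in> borel_measurable (PiM I (\<lambda>_. gauss_vec D)) \<longleftrightarrow> (\<lambda>x. undefined j :: real) \<in> borel_measurable (PiM I (\<lambda>_. gauss_vec D))"
    by (rule Sigma_Algebra.measurable_cong) (use False in \<open>auto simp: space_PiM PiE_def extensional_def\<close>)
  thus ?thesis by simp
qed

lemma proj_comp_meas[measurable]:
  fixes e :: "'k::finite \<Rightarrow> nat" and f :: "real^'k \<Rightarrow> real"
  assumes [measurable]: "f \<in> borel_measurable borel"
  shows "(\<lambda>\<omega>. f (proj e (\<omega> i))) \<in> borel_measurable (PiM I (\<lambda>_. gauss_vec D))"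
proof -
  have "(\<lambda>\<omega>. proj e (\<omega> i)) \<in> borel_measurable (PiM I (\<lambda>_. gauss_vec D))"
    unfolding proj_def by (intro measurable_vec_lambda) simp
  thus ?thesis by measurable
qed

lemma target_meas[measurable]:
  fixes e :: "'k::finite \<Rightarrow> nat" and f :: "real^'k \<Rightarrow> real"
  assumes [measurable]: "f \<in> borel_measurable borel"
  shows "(\<lambda>\<omega>. target_int N e f \<omega>) \<in> borel_measurable (PiM I (\<lambda>_. gauss_vec D))"
proof -
  interpret GK: prob_space "gauss_vec CARD('k)" by (rule prob_gauss_vec)
  have v: "(\<lambda>p. \<chi> i. Y0 N (fst p) (e i) / 2 + sqrt (1/2) * snd p (e i))
      \<in> borel_measurable (PiM I (\<lambda>_. gauss_vec D) \<Otimes>\<^sub>M gauss_vec CARD('k))"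
    unfolding Y0_def by (intro measurable_vec_lambda) measurable
  have "case_prod (\<lambda>\<omega> z. f (\<chi> i. Y0 N \<omega> (e i) / 2 + sqrt (1/2) * z (e i)))
      \<in> borel_measurable (PiM I (\<lambda>_. gauss_vec D) \<Otimes>\<^sub>M gauss_vec CARD('k))"
    using measurable_compose[OF v assms] by (simp add: case_prod_beta)
  from GK.borel_measurable_lebesgue_integral[OF this]
  show ?thesis unfolding target_int_def .
qed



lemma dev_bound:
  fixes e :: "'k::finite \<Rightarrow> nat" and f :: "real^'k \<Rightarrow> real"
  assumes e: "bij_betw e UNIV {..<CARD('k)}" and KD: "CARD('k) \<le> D" and N: "N \<ge> 1"
    and fm[measurable]: "f \<in> borel_measurable borel" and fb: "\<And>x. \<bar>f x\<bar> \<le> Mb" and eps: "eps > 0"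
  shows "dev_prob N D e f eps \<le> 4 * Mb\<^sup>2 / (real N * eps\<^sup>2)
          + (Mb\<^sup>2 + 1) / (real N * (min (1/2) (eps / (4 * (1 + Mb))))\<^sup>2) * 2 ^ D"
proof -
  define \<eta> where "\<eta> = min (1/2) (eps / (4 * (1 + Mb)))"
  have Mb0: "Mb \<ge> 0" using fb[of 0] by linarith
  have \<eta>0: "0 < \<eta>" using eps Mb0 by (simp add: \<eta>_def)
  have \<eta>1: "\<eta> \<le> 1/2" unfolding \<eta>_def by (rule min.cobounded1)
  have \<eta>2: "2 * \<eta> * (1 + Mb) \<le> eps/2"
  proof -
    have "\<eta> \<le> eps / (4 * (1 + Mb))" by (simp add: \<eta>_def)
    hence "\<eta> * (1 + Mb) \<le> eps / (4 * (1 + Mb)) * (1 + Mb)" using Mb0 by (intro mult_right_mono) auto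
    also have "\<dots> = eps / 4" using Mb0 by (simp add: field_simps)
    finally show ?thesis by linarith
  qed
  interpret GK: prob_space "gauss_vec CARD('k)" by (rule prob_gauss_vec)
  interpret G: prob_space "gauss_vec D" by (rule prob_gauss_vec)
  interpret PG: product_sigma_finite "\<lambda>_. gauss_vec D" by (simp add: product_sigma_finite_def G.sigma_finite_measure_axioms)
  define P where "P = PiM {..Suc N} (\<lambda>_. gauss_vec D)"
  define inner where "inner \<omega> = (\<Sum>J\<in>{1..N} \<rightarrow>\<^sub>E {1..N}. (\<Prod>l=1..N. weight N D \<omega> (J l)) *
           (if \<bar>emp_int N e f \<omega> J - target_int N e f \<omega>\<bar> > eps then 1 else 0))" for \<omega>
  define p where "p \<omega> i = exp (- sqdist D (Y0 N \<omega>) (\<omega> i) / 2)" for \<omega> :: "nat \<Rightarrow> nat \<Rightarrow> real" and i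
  define c where "c \<omega> = (\<Prod>j<D. c1 (Y0 N \<omega> j))" for \<omega> :: "nat \<Rightarrow> nat \<Rightarrow> real"
  define GG where "GG \<omega> = ((((1/real N) * (\<Sum>i=1..N. p \<omega> i * f (proj e (\<omega> i)))) - c \<omega> * target_int N e f \<omega>)\<^sup>2
      + ((1/real N) * (\<Sum>i=1..N. p \<omega> i) - c \<omega>)\<^sup>2) / (\<eta>\<^sup>2 * (c \<omega>)\<^sup>2)" for \<omega>
  define K0 where "K0 = 4 * Mb\<^sup>2 / (real N * eps\<^sup>2)"
  define C where "C = (Mb\<^sup>2 + 1) / (real N * \<eta>\<^sup>2)"
  have C0: "C \<ge> 0" unfolding C_def by simp
  have K00: "K0 \<ge> 0" unfolding K0_def by simp
  have Tb: "\<bar>target_int N e f \<omega>\<bar> \<le> Mb" for \<omega>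
  proof -
    have "\<bar>target_int N e f \<omega>\<bar> \<le> (\<integral>z. \<bar>f (\<chi> i. Y0 N \<omega> (e i) / 2 + sqrt (1/2) * z (e i))\<bar> \<partial>gauss_vec CARD('k))"
      unfolding target_int_def by (rule integral_abs_bound)
    also have "\<dots> \<le> (\<integral>z. Mb \<partial>gauss_vec CARD('k))"
    proof -
      have "(\<lambda>z. \<chi> i. Y0 N \<omega> (e i) / 2 + sqrt (1/2) * z (e i)) \<in> borel_measurable (gauss_vec CARD('k))"
        by (intro measurable_vec_lambda) measurable
      hence zm: "(\<lambda>z. f (\<chi> i. Y0 N \<omega> (e i) / 2 + sqrt (1/2) * z (e i))) \<in> borel_measurable (gauss_vec CARD('k))"
        by measurable
      show ?thesis using fb Mb0 zm by (intro integral_mono GK.integrable_const_bound[where B=Mb]) auto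
    qed
    finally show ?thesis by (simp add: GK.prob_space)
  qed
  have cpos: "c \<omega> > 0" for \<omega> unfolding c_def by (intro prod_pos) (simp add: c1_pos)
  have point: "inner \<omega> \<le> K0 + GG \<omega>" for \<omega>
  proof -
    have "inner \<omega> = (\<Sum>J\<in>{1..N} \<rightarrow>\<^sub>E {1..N}. (\<Prod>l=1..N. p \<omega> (J l) / (\<Sum>j=1..N. p \<omega> j)) *
            (if \<bar>(1 / real N) * (\<Sum>l=1..N. f (proj e (\<omega> (J l)))) - target_int N e f \<omega>\<bar> > eps then 1 else 0))"
      unfolding inner_def weight_def emp_int_def p_def ..
    also have "\<dots> \<le> K0 + GG \<omega>"
      unfolding K0_def GG_def
      by (rule point_bound[OF N _ fb cpos Tb \<eta>0 \<eta>1 \<eta>2 eps]) (simp add: p_def)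
    finally show ?thesis .
  qed
  have inner_nn: "inner \<omega> \<ge> 0" for \<omega>
    unfolding inner_def weight_def
    by (intro sum_nonneg mult_nonneg_nonneg prod_nonneg divide_nonneg_nonneg) (auto intro!: sum_nonneg)
  have sqm: "(\<lambda>\<omega>. sqdist D (Y0 N \<omega>) (\<omega> i)) \<in> borel_measurable P" for i
    unfolding sqdist_def Y0_def P_def
    by (intro borel_measurable_sum borel_measurable_power borel_measurable_diff borel_measurable_add comp2_all)
  have pm[measurable]: "(\<lambda>\<omega>. p \<omega> i) \<in> borel_measurable P" for i
    unfolding p_def using sqm[of i] by measurable
  have wm[measurable]: "(\<lambda>\<omega>. weight N D \<omega> i) \<in> borel_measurable P" for i
  proof -
    have "(\<lambda>\<omega>. p \<omega> i / (\<Sum>j=1..N. p \<omega> j)) \<in> borel_measurable P"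
      by (intro borel_measurable_divide borel_measurable_sum pm)
    thus ?thesis unfolding weight_def p_def .
  qed
  have fpm[measurable]: "(\<lambda>\<omega>. f (proj e (\<omega> i))) \<in> borel_measurable P" for i
    unfolding P_def by (rule proj_comp_meas[OF fm])
  have em[measurable]: "(\<lambda>\<omega>. emp_int N e f \<omega> J) \<in> borel_measurable P" for J
    unfolding emp_int_def by (intro borel_measurable_times borel_measurable_const borel_measurable_sum fpm)
  have Tm[measurable]: "(\<lambda>\<omega>. target_int N e f \<omega>) \<in> borel_measurable P"
    unfolding P_def by (rule target_meas[OF fm])
  have indm: "(\<lambda>\<omega>. if \<bar>emp_int N e f \<omega> J - target_int N e f \<omega>\<bar> > eps then 1 else 0 :: real) \<in> borel_measurable P" for J
    by measurable
  have innerm: "inner \<in> borel_measurable P"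
    unfolding inner_def
    by (intro borel_measurable_sum borel_measurable_times borel_measurable_prod wm indm)
  have cm: "c \<in> borel_measurable P"
  proof -
    have "(\<lambda>\<omega>. \<Prod>j<D. c1 (Y0 N \<omega> j)) \<in> borel_measurable P"
    proof (intro borel_measurable_prod)
      fix j
      have "(\<lambda>\<omega>. Y0 N \<omega> j) \<in> borel_measurable P" unfolding Y0_def P_def
        by (intro borel_measurable_add comp2_all)
      thus "(\<lambda>\<omega>. c1 (Y0 N \<omega> j)) \<in> borel_measurable P" unfolding c1_def by measurable
    qed
    thus ?thesis unfolding c_def .
  qed
  have GGm: "GG \<in> borel_measurable P"
  proof -
    note cm[measurable]
    have s1[measurable]: "(\<lambda>\<omega>. \<Sum>i=1..N. p \<omega> i * f (proj e (\<omega> i))) \<in> borel_measurable P"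
      by (intro borel_measurable_sum borel_measurable_times pm fpm)
    have s2[measurable]: "(\<lambda>\<omega>. \<Sum>i=1..N. p \<omega> i) \<in> borel_measurable P"
      by (intro borel_measurable_sum pm)
    show ?thesis unfolding GG_def by measurable
  qed
  have "dev_prob N D e f eps = integral\<^sup>L P inner"
    unfolding dev_prob_def data_measure_def gauss_vec_def P_def inner_def ..
  also have "\<dots> = enn2real (\<integral>\<^sup>+\<omega>. ennreal (inner \<omega>) \<partial>P)"
    using innerm inner_nn by (intro integral_eq_nn_integral) auto
  also have "\<dots> \<le> K0 + C * 2 ^ D"
  proof (rule enn2real_leI)
    show "0 \<le> K0 + C * 2 ^ D" using K00 C0 by simp
    have "(\<integral>\<^sup>+\<omega>. ennreal (inner \<omega>) \<partial>P) \<le> (\<integral>\<^sup>+\<omega>. ennreal K0 + ennreal (GG \<omega>) \<partial>P)"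
    proof (intro nn_integral_mono)
      fix \<omega>
      have "GG \<omega> \<ge> 0" unfolding GG_def by simp
      thus "ennreal (inner \<omega>) \<le> ennreal K0 + ennreal (GG \<omega>)"
        using point[of \<omega>] K00 by (simp add: ennreal_plus[symmetric] del: ennreal_plus)
    qed
    also have "\<dots> = ennreal K0 * emeasure P (space P) + (\<integral>\<^sup>+\<omega>. ennreal (GG \<omega>) \<partial>P)"
      using GGm by (subst nn_integral_add) auto
    also have "emeasure P (space P) = 1"
    proof -
      interpret PP: prob_space P unfolding P_def by (rule prob_space_PiM) (rule prob_gauss_vec)
      show ?thesis by (rule PP.emeasure_space_1)
    qed
    also have "(\<integral>\<^sup>+\<omega>. ennreal (GG \<omega>) \<partial>P) \<le> ennreal (C * 2 ^ D)"
    proof -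
      define I where "I = {0, Suc N}"
      define J where "J = {1..N}"
      have U: "{..Suc N} = I \<union> J" unfolding I_def J_def by auto
      have disj: "I \<inter> J = {}" unfolding I_def J_def by auto
      have GGm': "(\<lambda>\<omega>. ennreal (GG \<omega>)) \<in> borel_measurable (PiM (I \<union> J) (\<lambda>_. gauss_vec D))"
        using GGm unfolding P_def U by measurable
      have "(\<integral>\<^sup>+\<omega>. ennreal (GG \<omega>) \<partial>P)
          = (\<integral>\<^sup>+x. (\<integral>\<^sup>+z. ennreal (GG (merge I J (x, z))) \<partial>PiM J (\<lambda>_. gauss_vec D)) \<partial>PiM I (\<lambda>_. gauss_vec D))"
        unfolding P_def U by (rule PG.product_nn_integral_fold[OF disj _ _ GGm']) (auto simp: I_def J_def)
      also have "\<dots> \<le> (\<integral>\<^sup>+x. ennreal (C * (\<Prod>j<D. rr (x 0 j + x (Suc N) j))) \<partial>PiM I (\<lambda>_. gauss_vec D))"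
      proof (rule nn_integral_mono)
        fix x assume x: "x \<in> space (PiM I (\<lambda>_. gauss_vec D))"
        define y where "y j = x 0 j + x (Suc N) j" for j
        have eqGG: "GG (merge I J (x, z)) =
           ((((1/real N) * (\<Sum>i=1..N. exp (- sqdist D y (z i) / 2) * f (proj e (z i))))
              - (\<Prod>j<D. c1 (y j)) * (\<integral>z. f (\<chi> i. y (e i)/2 + sqrt (1/2) * z (e i)) \<partial>gauss_vec CARD('k)))\<^sup>2
            + ((1/real N) * (\<Sum>i=1..N. exp (- sqdist D y (z i) / 2)) - (\<Prod>j<D. c1 (y j)))\<^sup>2)
            / (\<eta>\<^sup>2 * (\<Prod>j<D. c1 (y j))\<^sup>2)" for z
        proof -
          define \<omega> where "\<omega> = merge I J (x, z)"
          have Yw: "Y0 N \<omega> = y" by (auto simp: \<omega>_def Y0_def merge_def fun_eq_iff y_def I_def)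
          have wi: "\<omega> i = z i" if "i \<in> {1..N}" for i
            using that by (auto simp: \<omega>_def merge_def I_def J_def)
          have s1: "(\<Sum>i=1..N. p \<omega> i * f (proj e (\<omega> i))) = (\<Sum>i=1..N. exp (- sqdist D y (z i) / 2) * f (proj e (z i)))"
            by (intro sum.cong refl) (simp add: p_def Yw wi)
          have s2: "(\<Sum>i=1..N. p \<omega> i) = (\<Sum>i=1..N. exp (- sqdist D y (z i) / 2))"
            by (intro sum.cong refl) (simp add: p_def Yw wi)
          show ?thesis unfolding \<omega>_def[symmetric] GG_def s1 s2 c_def target_int_def Yw ..
        qed
        have "(\<integral>\<^sup>+z. ennreal (GG (merge I J (x, z))) \<partial>PiM J (\<lambda>_. gauss_vec D))
            = (\<integral>\<^sup>+z. ennreal (((((1/real N) * (\<Sum>i=1..N. exp (- sqdist D y (z i) / 2) * f (proj e (z i))))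
              - (\<Prod>j<D. c1 (y j)) * (\<integral>z. f (\<chi> i. y (e i)/2 + sqrt (1/2) * z (e i)) \<partial>gauss_vec CARD('k)))\<^sup>2
            + ((1/real N) * (\<Sum>i=1..N. exp (- sqdist D y (z i) / 2)) - (\<Prod>j<D. c1 (y j)))\<^sup>2)
            / (\<eta>\<^sup>2 * (\<Prod>j<D. c1 (y j))\<^sup>2)) \<partial>PiM J (\<lambda>_. gauss_vec D))"
          by (simp only: eqGG)
        also have "\<dots> \<le> ennreal ((Mb\<^sup>2 + 1) / (real N * \<eta>\<^sup>2) * (\<Prod>j<D. rr (y j)))"
          unfolding J_def by (rule inner_X[OF e KD N fm fb \<eta>0])
        finally show "(\<integral>\<^sup>+z. ennreal (GG (merge I J (x, z))) \<partial>PiM J (\<lambda>_. gauss_vec D))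
            \<le> ennreal (C * (\<Prod>j<D. rr (x 0 j + x (Suc N) j)))"
          unfolding C_def y_def .
      qed
      also have "\<dots> = ennreal (C * 2 ^ D)" unfolding I_def by (rule outer_int[OF C0])
      finally show ?thesis .
    qed
    finally show "(\<integral>\<^sup>+\<omega>. ennreal (inner \<omega>) \<partial>P) \<le> ennreal (K0 + C * 2 ^ D)"
      using K00 C0 by (simp add: ennreal_plus[symmetric] del: ennreal_plus)
  qed
  finally show ?thesis unfolding K0_def C_def \<eta>_def .
qed



lemma lim_pow_ratio:
  fixes n d :: "nat \<Rightarrow> nat"
  assumes d1: "\<And>m. d m \<ge> 1"
    and regime: "filterlim (\<lambda>m. ln (real (n m)) / real (d m)) at_top sequentially"
  shows "(\<lambda>m. 2 ^ d m / real (n m)) \<longlonglongrightarrow> 0"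
proof -
  define r where "r m = ln (real (n m)) / real (d m)" for m
  have ev: "eventually (\<lambda>m. r m \<ge> ln 2 + 1) sequentially"
    using regime unfolding r_def filterlim_at_top by blast
  have lim: "(\<lambda>m. exp (-(r m - ln 2))) \<longlonglongrightarrow> 0"
  proof -
    have "filterlim (\<lambda>m. r m - ln 2) at_top sequentially"
      using filterlim_tendsto_add_at_top[OF tendsto_const[of "-ln 2"] regime] by (simp add: r_def)
    hence "filterlim (\<lambda>m. -(r m - ln 2)) at_bot sequentially"
      by (simp add: filterlim_uminus_at_bot)
    thus ?thesis by (rule filterlim_compose[OF exp_at_bot])
  qed
  show ?thesis
  proof (rule tendsto_sandwich[OF _ _ tendsto_const lim])
    show "eventually (\<lambda>m. 0 \<le> 2 ^ d m / real (n m)) sequentially" by simp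
    show "eventually (\<lambda>m. 2 ^ d m / real (n m) \<le> exp (-(r m - ln 2))) sequentially"
      using ev
    proof eventually_elim
      case (elim m)
      have d0: "real (d m) \<ge> 1" using d1[of m] by simp
      have lnpos: "ln (real (n m)) > 0"
      proof -
        have "r m > 0" using elim ln_gt_zero[of 2] by linarith
        thus ?thesis using d0 unfolding r_def by (simp add: zero_less_divide_iff)
      qed
      have npos: "real (n m) > 0" using lnpos by (cases "n m = 0") auto
      have lnn: "ln (real (n m)) = r m * real (d m)" unfolding r_def using d0 by simp
      have "2 ^ d m / real (n m) = exp (real (d m) * ln 2) / exp (ln (real (n m)))"
        using npos by (simp add: exp_of_nat_mult)
      also have "\<dots> = exp (- (real (d m) * (r m - ln 2)))"
        unfolding lnn by (simp add: exp_diff[symmetric] algebra_simps)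
      also have "\<dots> \<le> exp (-(r m - ln 2))"
      proof -
        have "r m - ln 2 \<ge> 0" using elim by simp
        hence "1 * (r m - ln 2) \<le> real (d m) * (r m - ln 2)" using d0 by (intro mult_right_mono) auto
        thus ?thesis by simp
      qed
      finally show ?case .
    qed
  qed
qed

lemma weight_nonneg: "weight n d \<omega> i \<ge> 0"
  unfolding weight_def by (intro divide_nonneg_nonneg sum_nonneg) auto

theorem corollary4p2:
  fixes n d :: "nat \<Rightarrow> nat" and e :: "'k::finite \<Rightarrow> nat"
  assumes e_bij: "bij_betw e UNIV {..<CARD('k)}"
    and dim: "\<And>m. CARD('k) \<le> d m"
    and regime: "filterlim (\<lambda>m. ln (real (n m)) / real (d m)) at_top sequentially"
  shows "\<forall>f :: real ^ 'k \<Rightarrow> real. continuous_on UNIV f \<and> bounded (range f) \<longrightarrow>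
           (\<forall>eps > 0. (\<lambda>m. dev_prob (n m) (d m) e f eps) \<longlonglongrightarrow> 0)"
proof (intro allI impI)
  fix f :: "real ^ 'k \<Rightarrow> real" and eps :: real
  assume f: "continuous_on UNIV f \<and> bounded (range f)" and eps: "eps > 0"
  have fm: "f \<in> borel_measurable borel" using f by (intro borel_measurable_continuous_onI) auto
  obtain Mb where Mb: "\<And>x. \<bar>f x\<bar> \<le> Mb"
    using f unfolding bounded_iff by auto
  have d1: "d m \<ge> 1" for m proof -
    have "0 < CARD('k)" by simp
    thus ?thesis using dim[of m] by linarith
  qed
  define \<eta> where "\<eta> = min (1/2) (eps / (4 * (1 + Mb)))"
  define K where "K = 4 * Mb\<^sup>2 / eps\<^sup>2 + (Mb\<^sup>2 + 1) / \<eta>\<^sup>2"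
  have K0: "K \<ge> 0" unfolding K_def by simp
  have lim: "(\<lambda>m. K * (2 ^ d m / real (n m))) \<longlonglongrightarrow> 0"
    using tendsto_mult_right_zero[OF lim_pow_ratio[OF d1 regime]] by simp
  have evn: "eventually (\<lambda>m. n m \<ge> 1) sequentially"
  proof -
    have "eventually (\<lambda>m. ln (real (n m)) / real (d m) \<ge> 1) sequentially"
      using regime unfolding filterlim_at_top by blast
    thus ?thesis
    proof eventually_elim
      case (elim m)
      show ?case
      proof (rule ccontr)
        assume "\<not> 1 \<le> n m" hence "n m = 0" by simp
        thus False using elim by simp
      qed
    qed
  qed
  show "(\<lambda>m. dev_prob (n m) (d m) e f eps) \<longlonglongrightarrow> 0"
  proof (rule tendsto_sandwich[OF _ _ tendsto_const lim])
    show "eventually (\<lambda>m. 0 \<le> dev_prob (n m) (d m) e f eps) sequentially"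
    proof (rule always_eventually, rule allI)
      fix m
      show "0 \<le> dev_prob (n m) (d m) e f eps"
        unfolding dev_prob_def
        by (intro integral_nonneg_AE AE_I2 sum_nonneg mult_nonneg_nonneg prod_nonneg weight_nonneg) auto
    qed
    show "eventually (\<lambda>m. dev_prob (n m) (d m) e f eps \<le> K * (2 ^ d m / real (n m))) sequentially"
      using evn
    proof eventually_elim
      case (elim m)
      have N: "real (n m) > 0" using elim by simp
      have "dev_prob (n m) (d m) e f eps \<le> 4 * Mb\<^sup>2 / (real (n m) * eps\<^sup>2)
          + (Mb\<^sup>2 + 1) / (real (n m) * \<eta>\<^sup>2) * 2 ^ d m"
        unfolding \<eta>_def by (rule dev_bound[OF e_bij dim elim fm Mb eps])
      also have "\<dots> \<le> 4 * Mb\<^sup>2 / (real (n m) * eps\<^sup>2) * 2 ^ d m + (Mb\<^sup>2 + 1) / (real (n m) * \<eta>\<^sup>2) * 2 ^ d m"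
      proof -
        have "(1::real) \<le> 2 ^ d m" by simp
        hence "4 * Mb\<^sup>2 / (real (n m) * eps\<^sup>2) * 1 \<le> 4 * Mb\<^sup>2 / (real (n m) * eps\<^sup>2) * 2 ^ d m"
          by (intro mult_left_mono) auto
        thus ?thesis by simp
      qed
      also have "\<dots> = K * (2 ^ d m / real (n m))"
        unfolding K_def by (simp add: algebra_simps add_divide_distrib)
      finally show ?case .
    qed
  qed
qed

end
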